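(* Let $\mathcal{G}=(\mathcal{V},\mathcal{E})$ be a connected undirected graph on $m$ vertices, decomposed into $M$ pairwise edge-disjoint matchings $\mathcal{G}_1,\dots,\mathcal{G}_M$ (so $\mathcal{E}=\bigcup_{j}\mathcal{E}_j$, $\mathcal{E}_i\cap\mathcal{E}_j=\varnothing$ for $i\neq j$), with Laplacians $\mathbf{L}_1,\dots,\mathbf{L}_M$. Let $C_b>0$ be a communication budget and let $(p_1,\dots,p_M)$ be an optimal solution of the convex problem $$\max_{p_1,\dots,p_M}\ \lambda_2\Big(\sum_{j=1}^M p_j\mathbf{L}_j\Big)\quad\text{s.t.}\quad \sum_{j=1}^M p_j\le C_b M,\quad 0\le p_j\le 1\ \ \forall j.$$ For $k=1,2,\dots$ let $\mathsf{B}_j^{(k)}$ be independent Bernoulli random variables with $\Pr[\mathsf{B}_j^{(k)}=1]=p_j$ (independent across $j$ and $k$), let $\mathbf{L}^{(k)}=\sum_{j=1}^M \mathsf{B}_j^{(k)}\mathbf{L}_j$, and for a real parameter $\alpha$ let $\mathbf{W}^{(k)}=\mathbf{I}-\alpha\mathbf{L}^{(k)}$. Define $\rho=\big\|\mathbb{E}[\mathbf{W}^{(k)\top}\mathbf{W}^{(k)}]-\tfrac{1}{m}\mathbf{1}\mathbf{1}^\top\big\|_2$ (spectral norm). Then there exists a range (a nonempty interval) of values of $\alpha$ for which $\rho<1$. Moreover, the value of $\alpha$ (minimizing $\rho$) can be obtained by solving the semidefinite program $$\min_{\rho,\alpha,\beta}\ \rho\quad\text{s.t.}\quad \alpha^2-\beta\le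 0,\qquad \mathbf{I}-2\alpha\overline{\mathbf{L}}+\beta\big[\overline{\mathbf{L}}^2+2\widetilde{\mathbf{L}}\big]-\tfrac{1}{m}\mathbf{1}\mathbf{1}^\top\preceq\rho\mathbf{I},$$ where $\beta$ is an auxiliary variable, $\overline{\mathbf{L}}=\sum_{j=1}^M p_j\mathbf{L}_j$ and $\widetilde{\mathbf{L}}=\sum_{j=1}^M p_j(1-p_j)\mathbf{L}_j$.
   Context: The Laplacian of a graph on vertex set $\{1,\dots,m\}$ is $\mathrm{diag}(d_1,\dots,d_m)-\mathbf{A}$, with $\mathbf{A}$ the adjacency matrix and $d_i$ the degrees; the Laplacian of a subgraph $\mathcal{G}_j=(\mathcal{V},\mathcal{E}_j)$ is taken on the full vertex set. $\lambda_2(\cdot)$ denotes the second smallest eigenvalue. A matching is a subgraph in which each vertex is incident with at most one edge. $\mathbf{1}$ is the all-ones vector in $\mathbb{R}^m$, and $\|\cdot\|_2$ is the matrix operator (spectral) norm. The procedure generating $\mathbf{L}^{(k)}$ (decomposition into matchings, activation probabilities from the optimization problem, independent Bernoulli activation) is the MATCHA scheme. *)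

theory Defs
  imports "HOL-Analysis.Analysis" "HOL-Library.Multiset"
begin

text \<open>Vertices are the elements of a finite type 'n, so m = CARD('n).
  Undirected edges are 2-element vertex sets.\<close>

definition graph_edges :: "'n set set \<Rightarrow> bool" where
  "graph_edges E \<longleftrightarrow> (\<forall>e\<in>E. card e = 2)"

definition connected_graph :: "('n::finite) set set \<Rightarrow> bool" where
  "connected_graph E \<longleftrightarrow> (\<forall>u v. (\<lambda>x y. {x, y} \<in> E)\<^sup>*\<^sup>* u v)"

definition is_matching :: "'n set set \<Rightarrow> bool" where
  "is_matching F \<longleftrightarrow> (\<forall>v. card {e\<in>F. v \<in> e} \<le> 1)"

definition laplacian :: "('n::finite) set set \<Rightarrow> real^'n^'n" where
  "laplacian F = (\<chi> i j. if i = j then real (card {e\<in>F. i \<in> e})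
                          else if {i, j} \<in> F then -1 else 0)"

text \<open>Eigenvalues of a real matrix, counted with (geometric) multiplicity;
  for symmetric matrices this is the usual multiset of eigenvalues.\<close>
definition eigenvalue_mset :: "real^'n^'n \<Rightarrow> real multiset" where
  "eigenvalue_mset A =
     (\<Sum>l\<in>{l. \<exists>x. x \<noteq> 0 \<and> A *v x = l *\<^sub>R x}.
        replicate_mset (dim {x. A *v x = l *\<^sub>R x}) l)"

definition lambda2 :: "real^'n^'n \<Rightarrow> real" where
  "lambda2 A = sorted_list_of_multiset (eigenvalue_mset A) ! 1"

definition psd_le :: "real^'n^'n \<Rightarrow> real^'n^'n \<Rightarrow> bool" where
  "psd_le A B \<longleftrightarrow> (\<forall>x. 0 \<le> x \<bullet> ((B - A) *v x))"

definition spec_norm :: "real^'n^'n \<Rightarrow> real" where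
  "spec_norm A = onorm (\<lambda>x. A *v x)"

definition ones_mat :: "real^'n^'n" where
  "ones_mat = (\<chi> i j. 1)"

definition matcha_feasible :: "nat \<Rightarrow> real \<Rightarrow> (nat \<Rightarrow> real) \<Rightarrow> bool" where
  "matcha_feasible M Cb p \<longleftrightarrow>
     (\<Sum>j<M. p j) \<le> Cb * real M \<and> (\<forall>j<M. 0 \<le> p j \<and> p j \<le> 1)"

definition matcha_optimal ::
  "nat \<Rightarrow> (nat \<Rightarrow> real^'n^'n) \<Rightarrow> real \<Rightarrow> (nat \<Rightarrow> real) \<Rightarrow> bool" where
  "matcha_optimal M L Cb p \<longleftrightarrow> matcha_feasible M Cb p \<and>
     (\<forall>q. matcha_feasible M Cb q \<longrightarrow>
        lambda2 (\<Sum>j<M. q j *\<^sub>R L j) \<le> lambda2 (\<Sum>j<M. p j *\<^sub>R L j))"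

text \<open>E[W^T W] for W = I - alpha L, L = sum_j B_j L_j with independent
  B_j ~ Bernoulli(p_j): written out as the finite sum over all outcomes.\<close>
definition expected_WtW ::
  "nat \<Rightarrow> (nat \<Rightarrow> real^'n^'n) \<Rightarrow> (nat \<Rightarrow> real) \<Rightarrow> real \<Rightarrow> real^'n^'n" where
  "expected_WtW M L p \<alpha> =
     (\<Sum>b\<in>PiE {..<M} (\<lambda>_. {0, 1::real}).
        (\<Prod>j<M. if b j = 1 then p j else 1 - p j) *\<^sub>R
        (let W = mat 1 - \<alpha> *\<^sub>R (\<Sum>j<M. b j *\<^sub>R L j) in transpose W ** W))"

definition matcha_rho ::
  "nat \<Rightarrow> (nat \<Rightarrow> real^'n^'n) \<Rightarrow> (nat \<Rightarrow> real) \<Rightarrow> real \<Rightarrow> real" where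
  "matcha_rho M L p \<alpha> =
     spec_norm (expected_WtW M L p \<alpha> - (1 / real CARD('n)) *\<^sub>R ones_mat)"

definition sdp_feasible ::
  "nat \<Rightarrow> (nat \<Rightarrow> real^'n^'n) \<Rightarrow> (nat \<Rightarrow> real) \<Rightarrow> real \<Rightarrow> real \<Rightarrow> real \<Rightarrow> bool" where
  "sdp_feasible M L p r \<alpha> \<beta> \<longleftrightarrow>
     (let Lbar = (\<Sum>j<M. p j *\<^sub>R L j);
          Ltil = (\<Sum>j<M. (p j * (1 - p j)) *\<^sub>R L j)
      in \<alpha>^2 - \<beta> \<le> 0 \<and>
         psd_le (mat 1 - (2 * \<alpha>) *\<^sub>R Lbar + \<beta> *\<^sub>R (Lbar ** Lbar + 2 *\<^sub>R Ltil)
                  - (1 / real CARD('n)) *\<^sub>R ones_mat)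
                (r *\<^sub>R mat 1))"

definition sdp_optimal ::
  "nat \<Rightarrow> (nat \<Rightarrow> real^'n^'n) \<Rightarrow> (nat \<Rightarrow> real) \<Rightarrow> real \<Rightarrow> real \<Rightarrow> real \<Rightarrow> bool" where
  "sdp_optimal M L p r \<alpha> \<beta> \<longleftrightarrow> sdp_feasible M L p r \<alpha> \<beta> \<and>
     (\<forall>r' \<alpha>' \<beta>'. sdp_feasible M L p r' \<alpha>' \<beta>' \<longrightarrow> r \<le> r')"

end

theory Submission
  imports Defs
begin



definition symm :: "real^'n^'n \<Rightarrow> bool" where "symm A \<longleftrightarrow> transpose A = A"

lemma symm_inner:
  fixes A :: "real^'n^'n"
  assumes "symm A" shows "(A *v x) \<bullet> y = x \<bullet> (A *v y)"
proof -
  have "A *v x = x v* A" using assms unfolding symm_def by (metis transpose_matrix_vector)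
  thus ?thesis by (simp add: dot_lmul_matrix)
qed

lemma psd_cs:
  fixes A :: "real^'n^'n"
  assumes "symm A" "\<And>z. 0 \<le> z \<bullet> (A *v z)"
  shows "(x \<bullet> (A *v y))^2 \<le> (x \<bullet> (A *v x)) * (y \<bullet> (A *v y))"
proof -
  define a b c where "a = x \<bullet> (A *v x)" and "b = x \<bullet> (A *v y)" and "c = y \<bullet> (A *v y)"
  have q: "0 \<le> a + 2*t*b + t^2*c" for t
  proof -
    have "0 \<le> (x + t *\<^sub>R y) \<bullet> (A *v (x + t *\<^sub>R y))" by (rule assms(2))
    also have "... = a + 2*t*b + t^2*c"
      using symm_inner[OF assms(1), of y x]
      by (simp add: a_def b_def c_def matrix_vector_right_distrib matrix_vector_mult_scaleR
           inner_add_left inner_add_right power2_eq_square algebra_simps inner_commute)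
    finally show ?thesis .
  qed
  have "c \<ge> 0" using assms(2) c_def by simp
  show ?thesis
  proof (cases "c = 0")
    case True
    have "b = 0"
    proof (rule ccontr)
      assume "b \<noteq> 0"
      have "0 \<le> a + 2*(-(a+1)/(2*b))*b + (-(a+1)/(2*b))^2*c" by (rule q)
      then show False using \<open>b\<noteq>0\<close> True by (simp add: field_simps)
    qed
    thus ?thesis using True by (simp add: b_def[symmetric] a_def[symmetric] c_def[symmetric])
  next
    case False
    hence "c > 0" using \<open>c\<ge>0\<close> by simp
    have "0 \<le> a + 2*(-b/c)*b + (-b/c)^2*c" by (rule q)
    also have "a + 2*(-b/c)*b + (-b/c)^2*c = (a*c - b^2)/c" using False
      by (simp add: field_simps power2_eq_square)
    finally have "0 \<le> a*c - b^2" using \<open>c>0\<close> by (simp add: zero_le_divide_iff)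
    thus ?thesis by (simp add: a_def b_def c_def)
  qed
qed

lemma quad_le_onorm:
  fixes A :: "real^'n^'n"
  shows "x \<bullet> (A *v x) \<le> onorm ((*v) A) * (norm x)^2"
proof -
  have "x \<bullet> (A *v x) \<le> norm x * norm (A *v x)" by (rule norm_cauchy_schwarz)
  also have "norm (A *v x) \<le> onorm ((*v) A) * norm x"
    by (rule onorm[OF matrix_vector_mul_bounded_linear])
  hence "norm x * norm (A *v x) \<le> norm x * (onorm ((*v) A) * norm x)"
    by (simp add: mult_left_mono)
  finally show ?thesis by (simp add: power2_eq_square algebra_simps)
qed

lemma onorm_le_quad:
  fixes A :: "real^'n^'n"
  assumes "symm A" "\<And>z. 0 \<le> z \<bullet> (A *v z)" "\<And>z. z \<bullet> (A *v z) \<le> c * (norm z)^2" "c \<ge> 0"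
  shows "onorm ((*v) A) \<le> c"
proof (rule onorm_le)
  fix x
  define y where "y = A *v x"
  have e: "(norm y)^2 = x \<bullet> (A *v y)" using symm_inner[OF assms(1), of x y]
    by (simp add: y_def power2_norm_eq_inner)
  have "((norm y)^2)^2 \<le> (x \<bullet> (A *v x)) * (y \<bullet> (A *v y))"
    using psd_cs[OF assms(1,2), of x y] e by simp
  also have "... \<le> (c * (norm x)^2) * (c * (norm y)^2)"
    by (rule mult_mono) (use assms in auto)
  finally have h: "(norm y)^2 * (norm y)^2 \<le> (c * norm x)^2 * (norm y)^2"
    by (simp add: power2_eq_square algebra_simps)
  show "norm (A *v x) \<le> c * norm x"
  proof (cases "y = 0")
    case True thus ?thesis using assms(4) by (simp add: y_def[symmetric])
  next
    case False
    hence pos: "(norm y)^2 > 0" by simp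
    have "(norm y)^2 \<le> (c * norm x)^2" using h unfolding mult_le_cancel_right_pos[OF pos] .
    hence "norm y \<le> c * norm x"
      using power2_le_imp_le mult_nonneg_nonneg[OF assms(4) norm_ge_zero] by blast
    thus ?thesis by (simp add: y_def)
  qed
qed

definition lapw :: "('n::finite \<Rightarrow> 'n \<Rightarrow> real) \<Rightarrow> real^'n^'n" where
  "lapw w = (\<chi> i j. (if i = j then (\<Sum>k\<in>UNIV. w i k) else 0) - w i j)"

lemma lapw_mv: "(lapw w *v x) $ i = (\<Sum>k\<in>UNIV. w i k * (x$i - x$k))"
proof -
  have "(lapw w *v x) $ i = (\<Sum>j\<in>UNIV. ((if i = j then (\<Sum>k\<in>UNIV. w i k) else 0) - w i j) * x$j)"
    by (simp add: lapw_def matrix_vector_mult_def)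
  also have "... = (\<Sum>j\<in>UNIV. (if i = j then (\<Sum>k\<in>UNIV. w i k) * x$j else 0) - w i j * x$j)"
    by (intro sum.cong refl) (auto simp: algebra_simps)
  also have "... = (\<Sum>k\<in>UNIV. w i k) * x$i - (\<Sum>j\<in>UNIV. w i j * x$j)"
    by (simp add: sum_subtractf)
  also have "... = (\<Sum>k\<in>UNIV. w i k * (x$i - x$k))"
    by (simp add: sum_distrib_right sum_distrib_left algebra_simps sum_subtractf)
  finally show ?thesis .
qed

lemma lapw_symm: assumes "\<And>i j. w i j = w j i" shows "symm (lapw w)"
  using assms by (simp add: symm_def transpose_def lapw_def vec_eq_iff)

lemma lapw_quad:
  assumes "\<And>i j. w i j = w j i"
  shows "x \<bullet> (lapw w *v x) = (\<Sum>i\<in>UNIV. \<Sum>j\<in>UNIV. w i j * (x$i - x$j)^2) / 2"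
proof -
  define S where "S = (\<Sum>i\<in>UNIV. \<Sum>j\<in>UNIV. w i j * x$i * (x$i - x$j))"
  have 1: "x \<bullet> (lapw w *v x) = S"
    by (simp add: S_def inner_vec_def lapw_mv sum_distrib_left algebra_simps)
  have "S = (\<Sum>j\<in>UNIV. \<Sum>i\<in>UNIV. w i j * x$i * (x$i - x$j))" unfolding S_def by (rule sum.swap)
  also have "... = (\<Sum>i\<in>UNIV. \<Sum>j\<in>UNIV. w i j * x$j * (x$j - x$i))"
    using assms by (metis (no_types, lifting) sum.cong)
  finally have 2: "S = (\<Sum>i\<in>UNIV. \<Sum>j\<in>UNIV. w i j * x$j * (x$j - x$i))" .
  have "2 * S = (\<Sum>i\<in>UNIV. \<Sum>j\<in>UNIV. w i j * (x$i - x$j)^2)"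
  proof -
    have "2 * S = S + (\<Sum>i\<in>UNIV. \<Sum>j\<in>UNIV. w i j * x$j * (x$j - x$i))" using 2 by simp
    also have "... = (\<Sum>i\<in>UNIV. \<Sum>j\<in>UNIV. w i j * x$i * (x$i - x$j) + w i j * x$j * (x$j - x$i))"
      unfolding S_def by (simp add: sum.distrib)
    also have "... = (\<Sum>i\<in>UNIV. \<Sum>j\<in>UNIV. w i j * (x$i - x$j)^2)"
      by (intro sum.cong refl) (simp add: power2_eq_square algebra_simps)
    finally show ?thesis .
  qed
  thus ?thesis using 1 by simp
qed

lemma lapw_sum:
  assumes "finite J"
  shows "(\<Sum>j\<in>J. c j *\<^sub>R lapw (w j)) = lapw (\<lambda>i k. \<Sum>j\<in>J. c j * w j i k)"
proof -
  have "(\<Sum>j\<in>J. c j *\<^sub>R lapw (w j)) $ i $ k = lapw (\<lambda>i k. \<Sum>j\<in>J. c j * w j i k) $ i $ k" for i k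
  proof (cases "i = k")
    case True
    have "(\<Sum>j\<in>J. c j * (\<Sum>l\<in>UNIV. w j i l)) = (\<Sum>l\<in>UNIV. \<Sum>j\<in>J. c j * w j i l)"
      by (simp add: sum_distrib_left) (rule sum.swap)
    thus ?thesis using True by (simp add: lapw_def sum_subtractf right_diff_distrib)
  next
    case False
    thus ?thesis by (simp add: lapw_def sum_negf)
  qed
  thus ?thesis by (simp add: vec_eq_iff)
qed




definition adj :: "('n::finite) set set \<Rightarrow> 'n \<Rightarrow> 'n \<Rightarrow> real" where
  "adj F i j = (if i \<noteq> j \<and> {i, j} \<in> F then 1 else 0)"

definition nbr :: "('n::finite) set set \<Rightarrow> 'n \<Rightarrow> 'n set" where
  "nbr F i = {k. k \<noteq> i \<and> {i, k} \<in> F}"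

lemma adj_sym: "adj F i j = adj F j i"
  by (auto simp: adj_def insert_commute)

lemma adj_nonneg: "0 \<le> adj F i j"
  by (simp add: adj_def)

lemma card_inc:
  assumes "\<forall>e\<in>F. card e = 2"
  shows "card {e\<in>F. i \<in> e} = card (nbr F i)"
proof -
  have "(\<lambda>k. {i, k}) ` nbr F i = {e\<in>F. i \<in> e}"
  proof
    show "(\<lambda>k. {i, k}) ` nbr F i \<subseteq> {e\<in>F. i \<in> e}" by (auto simp: nbr_def)
    show "{e\<in>F. i \<in> e} \<subseteq> (\<lambda>k. {i, k}) ` nbr F i"
    proof
      fix e assume "e \<in> {e\<in>F. i \<in> e}"
      hence e: "e \<in> F" "i \<in> e" by auto
      then obtain a b where ab: "a \<noteq> b" "e = {a, b}" using assms by (meson card_2_iff)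
      show "e \<in> (\<lambda>k. {i, k}) ` nbr F i"
      proof (cases "i = a")
        case True
        hence "b \<in> nbr F i" using ab e by (auto simp: nbr_def)
        thus ?thesis using ab True by auto
      next
        case False
        hence "i = b" using ab e by auto
        hence "a \<in> nbr F i" using ab e by (auto simp: nbr_def insert_commute)
        thus ?thesis using ab \<open>i = b\<close> by (auto simp: insert_commute)
      qed
    qed
  qed
  moreover have "inj_on (\<lambda>k. {i, k}) (nbr F i)"
    by (auto simp: inj_on_def nbr_def doubleton_eq_iff)
  ultimately show ?thesis by (metis card_image)
qed

lemma sum_adj: "(\<Sum>k\<in>UNIV. adj F i k * f k) = (\<Sum>k\<in>nbr F i. f k)"
proof -
  have "(\<Sum>k\<in>UNIV. adj F i k * f k) = (\<Sum>k\<in>UNIV. if k \<in> nbr F i then f k else 0)"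
    by (intro sum.cong refl) (auto simp: adj_def nbr_def)
  also have "... = (\<Sum>k\<in>nbr F i. f k)"
    by (simp add: sum.If_cases)
  finally show ?thesis .
qed

lemma laplacian_lapw:
  assumes "\<forall>e\<in>F. card e = 2"
  shows "laplacian F = lapw (adj F)"
proof -
  have "(\<Sum>k\<in>UNIV. adj F i k) = real (card {e\<in>F. i \<in> e})" for i
    using sum_adj[of F i "\<lambda>_. 1"] card_inc[OF assms, of i] by simp
  moreover have "{i} \<notin> F" for i using assms by fastforce
  ultimately show ?thesis
    by (auto simp: vec_eq_iff laplacian_def lapw_def adj_def)
qed

lemma lapw_adj_mv: "(lapw (adj F) *v x) $ i = (\<Sum>k\<in>nbr F i. x$i - x$k)"
  by (simp add: lapw_mv sum_adj)

lemma matching_sq: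
  assumes "\<forall>e\<in>F. card e = 2" "is_matching F"
  shows "lapw (adj F) *v (lapw (adj F) *v x) = 2 *\<^sub>R (lapw (adj F) *v x)"
proof -
  have c1: "card (nbr F i) \<le> 1" for i
    using assms(2) card_inc[OF assms(1), of i] unfolding is_matching_def by metis
  have cases: "nbr F i = {} \<or> (\<exists>k. nbr F i = {k})" for i
  proof -
    have "card (nbr F i) = 0 \<or> card (nbr F i) = 1" using c1[of i] by linarith
    moreover have "finite (nbr F i)" by simp
    ultimately show ?thesis by (auto simp: card_1_singleton_iff card_eq_0_iff)
  qed
  have sym: "i \<in> nbr F k" if "k \<in> nbr F i" for i k
    using that by (auto simp: nbr_def insert_commute)
  show ?thesis
  proof (subst vec_eq_iff, intro allI)
    fix i
    show "(lapw (adj F) *v (lapw (adj F) *v x)) $ i = (2 *\<^sub>R (lapw (adj F) *v x)) $ i"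
    proof (cases "nbr F i = {}")
      case True thus ?thesis by (simp add: lapw_adj_mv)
    next
      case False
      then obtain k where k: "nbr F i = {k}" using cases by blast
      hence "i \<in> nbr F k" using sym by auto
      hence k2: "nbr F k = {i}" using cases[of k] by auto
      show ?thesis by (simp add: lapw_adj_mv k k2)
    qed
  qed
qed

lemma lapw_ker:
  assumes sym: "\<And>i j. w i j = w j i" and nn: "\<And>i j. 0 \<le> w i j"
    and ker: "lapw w *v x = 0" and pos: "w i j > 0"
  shows "x$i = x$j"
proof -
  have "(\<Sum>i\<in>UNIV. \<Sum>j\<in>UNIV. w i j * (x$i - x$j)^2) = 0"
    using lapw_quad[of w x] sym ker by simp
  hence "(\<Sum>j\<in>UNIV. w i j * (x$i - x$j)^2) = 0"
    by (subst (asm) sum_nonneg_eq_0_iff) (auto intro!: sum_nonneg simp: nn)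
  hence "w i j * (x$i - x$j)^2 = 0"
    by (subst (asm) sum_nonneg_eq_0_iff) (auto simp: nn)
  thus ?thesis using pos by simp
qed

lemma lapw_psd:
  assumes sym: "\<And>i j. w i j = w j i" and nn: "\<And>i j. 0 \<le> w i j"
  shows "0 \<le> x \<bullet> (lapw w *v x)"
proof -
  have "0 \<le> (\<Sum>i\<in>UNIV. \<Sum>j\<in>UNIV. w i j * (x$i - x$j)^2)"
    by (intro sum_nonneg mult_nonneg_nonneg nn) auto
  thus ?thesis using lapw_quad[of w x] sym by simp
qed




definition Pb :: "nat \<Rightarrow> (nat \<Rightarrow> real) \<Rightarrow> (nat \<Rightarrow> real) \<Rightarrow> real" where
  "Pb M p b = (\<Prod>j<M. if b j = 1 then p j else 1 - p j)"

lemma moment: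
  assumes "T \<subseteq> {..<M}"
  shows "(\<Sum>b\<in>PiE {..<M} (\<lambda>_. {0, 1::real}). Pb M p b * (\<Prod>k\<in>T. b k)) = (\<Prod>k\<in>T. p k)"
proof -
  define h where "h k v = (if v = 1 then p k else 1 - p k) * (if k \<in> T then v else 1)" for k and v :: real
  have T: "{..<M} \<inter> T = T" using assms by auto
  have "Pb M p b * (\<Prod>k\<in>T. b k) = (\<Prod>k<M. h k (b k))" for b
  proof -
    have "(\<Prod>k<M. h k (b k)) = Pb M p b * (\<Prod>k<M. if k \<in> T then b k else 1)"
      by (simp add: h_def Pb_def prod.distrib)
    also have "(\<Prod>k<M. if k \<in> T then b k else 1) = (\<Prod>k\<in>T. b k)"
      by (simp add: prod.If_cases T)
    finally show ?thesis by simp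
  qed
  hence "(\<Sum>b\<in>PiE {..<M} (\<lambda>_. {0, 1::real}). Pb M p b * (\<Prod>k\<in>T. b k))
        = (\<Sum>b\<in>PiE {..<M} (\<lambda>_. {0, 1::real}). \<Prod>k<M. h k (b k))" by simp
  also have "... = (\<Prod>k<M. \<Sum>v\<in>{0, 1::real}. h k v)"
    by (rule prod_sum_PiE[symmetric]) auto
  also have "... = (\<Prod>k<M. if k \<in> T then p k else 1)"
    by (intro prod.cong refl) (simp add: h_def)
  also have "... = (\<Prod>k\<in>T. p k)"
    by (simp add: prod.If_cases T)
  finally show ?thesis .
qed

lemma moment0: "(\<Sum>b\<in>PiE {..<M} (\<lambda>_. {0, 1::real}). Pb M p b) = 1"
  using moment[of "{}" M p] by simp

lemma moment1: assumes "i < M"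
  shows "(\<Sum>b\<in>PiE {..<M} (\<lambda>_. {0, 1::real}). Pb M p b * b i) = p i"
  using moment[of "{i}" M p] assms by simp

lemma moment2: assumes "i < M" "j < M"
  shows "(\<Sum>b\<in>PiE {..<M} (\<lambda>_. {0, 1::real}). Pb M p b * (b i * b j))
         = (if i = j then p i else p i * p j)"
proof (cases "i = j")
  case True
  have "(\<Sum>b\<in>PiE {..<M} (\<lambda>_. {0, 1::real}). Pb M p b * (b i * b j))
      = (\<Sum>b\<in>PiE {..<M} (\<lambda>_. {0, 1::real}). Pb M p b * b i)"
  proof (intro sum.cong refl)
    fix b assume "b \<in> PiE {..<M} (\<lambda>_. {0, 1::real})"
    hence "b i \<in> {0, 1}" using assms by (auto simp: PiE_iff)
    thus "Pb M p b * (b i * b j) = Pb M p b * b i" using True by auto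
  qed
  thus ?thesis using moment1[OF assms(1)] True by simp
next
  case False
  thus ?thesis using moment[of "{i, j}" M p] assms by (simp add: mult.commute)
qed




lemma sum_mv: "(\<Sum>s\<in>S. f s) *v x = (\<Sum>s\<in>S. f s *v x)"
  by (induct S rule: infinite_finite_induct) (auto simp: matrix_vector_mult_add_rdistrib)

lemma mv_sum: "(A::real^'n^'m) *v (\<Sum>s\<in>S. f s) = (\<Sum>s\<in>S. A *v f s)"
  by (induct S rule: infinite_finite_induct) (auto simp: matrix_vector_right_distrib)

lemma scaleR_mv: "(c *\<^sub>R (A::real^'n^'m)) *v x = c *\<^sub>R (A *v x)"
  by (simp add: vec_eq_iff matrix_vector_mult_def sum_distrib_left mult.assoc)

lemma symm_add: "symm A \<Longrightarrow> symm B \<Longrightarrow> symm (A + B)"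
  by (simp add: symm_def transpose_def vec_eq_iff)
lemma symm_diff: "symm A \<Longrightarrow> symm B \<Longrightarrow> symm (A - B)"
  by (simp add: symm_def transpose_def vec_eq_iff)
lemma symm_scaleR: "symm A \<Longrightarrow> symm (c *\<^sub>R A)"
  by (simp add: symm_def transpose_def vec_eq_iff)
lemma symm_mat1: "symm (mat 1 :: real^'n^'n)"
  by (simp add: symm_def)
lemma symm_zero: "symm (0::real^'n^'n)"
  by (simp add: symm_def transpose_def vec_eq_iff)
lemma symm_sum: "(\<And>s. s \<in> S \<Longrightarrow> symm (f s)) \<Longrightarrow> symm (\<Sum>s\<in>S. f s)"
  by (induct S rule: infinite_finite_induct) (auto intro!: symm_add symm_zero)
lemma symm_mult_self: "symm A \<Longrightarrow> symm (A ** A)"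
  by (simp add: symm_def matrix_transpose_mul)

lemma sw1: "(\<Sum>b\<in>B. P b *\<^sub>R (\<Sum>j\<in>J. c b j *\<^sub>R (w j :: real^'n))) = (\<Sum>j\<in>J. (\<Sum>b\<in>B. P b * c b j) *\<^sub>R w j)"
  by (simp add: scaleR_sum_right scaleR_sum_left) (rule sum.swap)

lemma sw0: "(\<Sum>b\<in>B. P b *\<^sub>R (\<Sum>i\<in>I. f b i :: real^'n)) = (\<Sum>i\<in>I. \<Sum>b\<in>B. P b *\<^sub>R f b i)"
  by (simp add: scaleR_sum_right) (rule sum.swap)

lemma expected_WtW_eq:
  fixes L :: "nat \<Rightarrow> real^'n^'n"
  assumes symL: "\<And>j. j < M \<Longrightarrow> symm (L j)"
    and sq: "\<And>j x. j < M \<Longrightarrow> L j *v (L j *v x) = 2 *\<^sub>R (L j *v x)"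
  shows "expected_WtW M L p \<alpha> = mat 1 - (2*\<alpha>) *\<^sub>R (\<Sum>j<M. p j *\<^sub>R L j)
           + \<alpha>^2 *\<^sub>R ((\<Sum>j<M. p j *\<^sub>R L j) ** (\<Sum>j<M. p j *\<^sub>R L j)
                      + 2 *\<^sub>R (\<Sum>j<M. (p j * (1 - p j)) *\<^sub>R L j))"
proof -
  define B where "B = PiE {..<M} (\<lambda>_. {0, 1::real})"
  have finB: "finite B" unfolding B_def by (intro finite_PiE) auto
  show ?thesis
  proof (subst matrix_eq, intro allI)
    fix x :: "real^'n"
    define u where "u j = L j *v x" for j
    define v where "v i j = L i *v (L j *v x)" for i j
    have swp: "(\<Sum>j<M. \<Sum>i<M. (p j * p i) *\<^sub>R (L i *v (L j *v x))) = (\<Sum>i<M. \<Sum>j<M. (p i * p j) *\<^sub>R (L i *v (L j *v x)))"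
      by (subst sum.swap) (simp add: mult.commute)
    have WW: "(let W = mat 1 - \<alpha> *\<^sub>R (\<Sum>j<M. b j *\<^sub>R L j) in transpose W ** W) *v x
          = x - (2*\<alpha>) *\<^sub>R (\<Sum>j<M. b j *\<^sub>R u j) + \<alpha>^2 *\<^sub>R (\<Sum>i<M. \<Sum>j<M. (b i * b j) *\<^sub>R v i j)"
      for b :: "nat \<Rightarrow> real"
    proof -
      define W where "W = mat 1 - \<alpha> *\<^sub>R (\<Sum>j<M. b j *\<^sub>R L j)"
      have "symm W" unfolding W_def
        by (intro symm_diff symm_mat1 symm_scaleR symm_sum symL) auto
      hence tW: "transpose W = W" by (simp add: symm_def)
      have Wv: "W *v y = y - \<alpha> *\<^sub>R (\<Sum>j<M. b j *\<^sub>R (L j *v y))" for y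
        by (simp add: W_def matrix_vector_mult_diff_rdistrib scaleR_mv sum_mv)
      have "(transpose W ** W) *v x = W *v (W *v x)"
        by (simp add: tW matrix_vector_mul_assoc)
      also have "... = x - (2*\<alpha>) *\<^sub>R (\<Sum>j<M. b j *\<^sub>R u j) + \<alpha>^2 *\<^sub>R (\<Sum>i<M. \<Sum>j<M. (b i * b j) *\<^sub>R v i j)"
      proof -
        have Lw: "L j *v (W *v x) = u j - \<alpha> *\<^sub>R (\<Sum>i<M. b i *\<^sub>R v j i)" for j
          by (simp add: Wv u_def v_def matrix_vector_mult_diff_distrib mv_sum matrix_vector_mult_scaleR)
        define S1 where "S1 = (\<Sum>j<M. b j *\<^sub>R u j)"
        define D where "D = (\<Sum>j<M. \<Sum>i<M. (b j * b i) *\<^sub>R v j i)"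
        have e1: "W *v (W *v x) = W *v x - \<alpha> *\<^sub>R (\<Sum>j<M. b j *\<^sub>R (u j - \<alpha> *\<^sub>R (\<Sum>i<M. b i *\<^sub>R v j i)))"
          by (simp add: Wv[of "W *v x"] Lw)
        have e2: "(\<Sum>j<M. b j *\<^sub>R (u j - \<alpha> *\<^sub>R (\<Sum>i<M. b i *\<^sub>R v j i))) = S1 - \<alpha> *\<^sub>R D"
          unfolding S1_def D_def
          by (simp add: scaleR_diff_right sum_subtractf scaleR_sum_right mult.left_commute)
        have e3: "W *v x = x - \<alpha> *\<^sub>R S1"
          by (simp add: Wv u_def S1_def)
        have g: "xx - aa - (aa - cc) = xx - (aa + aa) + cc" for xx aa cc :: "real^'n"
          by (simp add: algebra_simps)
        have "W *v (W *v x) = x - \<alpha> *\<^sub>R S1 - (\<alpha> *\<^sub>R S1 - (\<alpha> * \<alpha>) *\<^sub>R D)"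
          by (subst e1, subst e2, subst e3) (simp only: scaleR_diff_right scaleR_scaleR)
        also have "... = x - (\<alpha> *\<^sub>R S1 + \<alpha> *\<^sub>R S1) + (\<alpha> * \<alpha>) *\<^sub>R D" by (rule g)
        also have "\<alpha> *\<^sub>R S1 + \<alpha> *\<^sub>R S1 = (2*\<alpha>) *\<^sub>R S1"
          by (metis mult_2 scaleR_left_distrib)
        finally show ?thesis by (simp add: S1_def D_def power2_eq_square)
      qed
      finally show ?thesis by (simp add: W_def Let_def)
    qed
    have "expected_WtW M L p \<alpha> *v x = (\<Sum>b\<in>B. Pb M p b *\<^sub>R
        ((let W = mat 1 - \<alpha> *\<^sub>R (\<Sum>j<M. b j *\<^sub>R L j) in transpose W ** W) *v x))"
      unfolding expected_WtW_def sum_mv scaleR_mv B_def Pb_def ..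
    also have "... = (\<Sum>b\<in>B. Pb M p b *\<^sub>R
        (x - (2*\<alpha>) *\<^sub>R (\<Sum>j<M. b j *\<^sub>R u j) + \<alpha>^2 *\<^sub>R (\<Sum>i<M. \<Sum>j<M. (b i * b j) *\<^sub>R v i j)))"
      by (rule sum.cong[OF refl], subst WW, rule refl)
    also have "... = (\<Sum>b\<in>B. Pb M p b) *\<^sub>R x
        - (2*\<alpha>) *\<^sub>R (\<Sum>j<M. (\<Sum>b\<in>B. Pb M p b * b j) *\<^sub>R u j)
        + \<alpha>^2 *\<^sub>R (\<Sum>i<M. \<Sum>j<M. (\<Sum>b\<in>B. Pb M p b * (b i * b j)) *\<^sub>R v i j)"
    proof -
      have "(\<Sum>b\<in>B. Pb M p b *\<^sub>R ((2*\<alpha>) *\<^sub>R (\<Sum>j<M. b j *\<^sub>R u j)))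
          = (2*\<alpha>) *\<^sub>R (\<Sum>b\<in>B. Pb M p b *\<^sub>R (\<Sum>j<M. b j *\<^sub>R u j))"
        by (simp add: scaleR_sum_right mult_ac)
      moreover have "(\<Sum>b\<in>B. Pb M p b *\<^sub>R (\<alpha>^2 *\<^sub>R (\<Sum>i<M. \<Sum>j<M. (b i * b j) *\<^sub>R v i j)))
          = \<alpha>^2 *\<^sub>R (\<Sum>b\<in>B. Pb M p b *\<^sub>R (\<Sum>i<M. \<Sum>j<M. (b i * b j) *\<^sub>R v i j))"
        by (simp add: scaleR_sum_right mult_ac)
      moreover have "(\<Sum>b\<in>B. Pb M p b *\<^sub>R (\<Sum>i<M. \<Sum>j<M. (b i * b j) *\<^sub>R v i j))
          = (\<Sum>i<M. \<Sum>j<M. (\<Sum>b\<in>B. Pb M p b * (b i * b j)) *\<^sub>R v i j)"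
        by (simp only: sw0) (simp add: scaleR_sum_left)
      ultimately show ?thesis
        by (simp add: scaleR_add_right scaleR_diff_right sum.distrib sum_subtractf scaleR_sum_left sw1)
    qed
    also have "... = x - (2*\<alpha>) *\<^sub>R (\<Sum>j<M. p j *\<^sub>R u j)
        + \<alpha>^2 *\<^sub>R (\<Sum>i<M. \<Sum>j<M. (if i = j then p i else p i * p j) *\<^sub>R v i j)"
    proof -
      have m0: "(\<Sum>b\<in>B. Pb M p b) = 1" using moment0[of M p] unfolding B_def .
      have m1: "(\<Sum>j<M. (\<Sum>b\<in>B. Pb M p b * b j) *\<^sub>R u j) = (\<Sum>j<M. p j *\<^sub>R u j)"
        by (rule sum.cong[OF refl]) (simp add: moment1 B_def)
      have m2: "(\<Sum>i<M. \<Sum>j<M. (\<Sum>b\<in>B. Pb M p b * (b i * b j)) *\<^sub>R v i j)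
          = (\<Sum>i<M. \<Sum>j<M. (if i = j then p i else p i * p j) *\<^sub>R v i j)"
        by (rule sum.cong[OF refl], rule sum.cong[OF refl]) (simp add: moment2 B_def)
      show ?thesis by (simp only: m0 m1 m2 scaleR_one)
    qed
    also have "(\<Sum>i<M. \<Sum>j<M. (if i = j then p i else p i * p j) *\<^sub>R v i j)
        = (\<Sum>i<M. \<Sum>j<M. (p i * p j) *\<^sub>R v i j) + 2 *\<^sub>R (\<Sum>j<M. (p j * (1 - p j)) *\<^sub>R u j)"
    proof -
      have "(\<Sum>i<M. \<Sum>j<M. (if i = j then p i else p i * p j) *\<^sub>R v i j)
         = (\<Sum>i<M. \<Sum>j<M. (p i * p j) *\<^sub>R v i j + (if i = j then (p i - p i * p i) *\<^sub>R v i j else 0))"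
        by (intro sum.cong refl) (auto simp: algebra_simps)
      also have "... = (\<Sum>i<M. \<Sum>j<M. (p i * p j) *\<^sub>R v i j) + (\<Sum>i<M. (p i - p i * p i) *\<^sub>R v i i)"
        by (simp add: sum.distrib)
      also have "(\<Sum>i<M. (p i - p i * p i) *\<^sub>R v i i) = 2 *\<^sub>R (\<Sum>j<M. (p j * (1 - p j)) *\<^sub>R u j)"
        by (simp add: scaleR_sum_right v_def u_def sq algebra_simps)
      finally show ?thesis .
    qed
    also have "x - (2*\<alpha>) *\<^sub>R (\<Sum>j<M. p j *\<^sub>R u j)
        + \<alpha>^2 *\<^sub>R ((\<Sum>i<M. \<Sum>j<M. (p i * p j) *\<^sub>R v i j) + 2 *\<^sub>R (\<Sum>j<M. (p j * (1 - p j)) *\<^sub>R u j))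
      = (mat 1 - (2*\<alpha>) *\<^sub>R (\<Sum>j<M. p j *\<^sub>R L j)
           + \<alpha>^2 *\<^sub>R ((\<Sum>j<M. p j *\<^sub>R L j) ** (\<Sum>j<M. p j *\<^sub>R L j)
                      + 2 *\<^sub>R (\<Sum>j<M. (p j * (1 - p j)) *\<^sub>R L j))) *v x"
      using swp by (simp add: matrix_vector_mult_add_rdistrib matrix_vector_mult_diff_rdistrib scaleR_mv sum_mv
          u_def v_def matrix_vector_mul_assoc[symmetric] mv_sum matrix_vector_mult_scaleR scaleR_sum_right)
    finally show "expected_WtW M L p \<alpha> *v x = (mat 1 - (2*\<alpha>) *\<^sub>R (\<Sum>j<M. p j *\<^sub>R L j)
           + \<alpha>^2 *\<^sub>R ((\<Sum>j<M. p j *\<^sub>R L j) ** (\<Sum>j<M. p j *\<^sub>R L j)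
                      + 2 *\<^sub>R (\<Sum>j<M. (p j * (1 - p j)) *\<^sub>R L j))) *v x" .
  qed
qed



definition evs :: "real^'n^'n \<Rightarrow> real set" where
  "evs A = {l. \<exists>x. x \<noteq> 0 \<and> A *v x = l *\<^sub>R x}"

lemma evs_finite:
  fixes A :: "real^'n^'n"
  assumes "symm A" shows "finite (evs A)"
proof -
  define f where "f l = (SOME x. x \<noteq> 0 \<and> A *v x = l *\<^sub>R x)" for l
  have f: "f l \<noteq> 0 \<and> A *v f l = l *\<^sub>R f l" if "l \<in> evs A" for l
    using that unfolding evs_def f_def by (metis (mono_tags, lifting) mem_Collect_eq someI_ex)
  have inj: "inj_on f (evs A)"
  proof (rule inj_onI)
    fix l1 l2 assume l: "l1 \<in> evs A" "l2 \<in> evs A" "f l1 = f l2"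
    hence "l1 *\<^sub>R f l1 = l2 *\<^sub>R f l1" using f by metis
    thus "l1 = l2" using f[OF l(1)] by (simp add: scaleR_cancel_right)
  qed
  have orth: "pairwise orthogonal (f ` evs A)"
  proof (unfold pairwise_def, intro ballI impI)
    fix x y assume "x \<in> f ` evs A" "y \<in> f ` evs A" "x \<noteq> y"
    then obtain l1 l2 where l: "l1 \<in> evs A" "l2 \<in> evs A" "x = f l1" "y = f l2" by auto
    with \<open>x \<noteq> y\<close> have "l1 \<noteq> l2" by auto
    have "l1 * (x \<bullet> y) = (A *v x) \<bullet> y" using f[OF l(1)] l(3) by simp
    also have "... = x \<bullet> (A *v y)" by (rule symm_inner[OF assms])
    also have "... = l2 * (x \<bullet> y)" using f[OF l(2)] l(4) by simp
    finally have "(l1 - l2) * (x \<bullet> y) = 0" by (simp add: algebra_simps)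
    thus "orthogonal x y" using \<open>l1 \<noteq> l2\<close> by (simp add: orthogonal_def)
  qed
  have "0 \<notin> f ` evs A" using f by auto
  hence "independent (f ` evs A)" using orth pairwise_orthogonal_independent by blast
  hence "finite (f ` evs A)" by (rule finiteI_independent)
  thus ?thesis using inj finite_imageD by blast
qed

lemma count_ev:
  fixes A :: "real^'n^'n"
  assumes "symm A"
  shows "count (eigenvalue_mset A) l = (if l \<in> evs A then dim {x. A *v x = l *\<^sub>R x} else 0)"
proof -
  have "count (eigenvalue_mset A) l
      = (\<Sum>a\<in>evs A. count (replicate_mset (dim {x. A *v x = a *\<^sub>R x}) a) l)"
    unfolding eigenvalue_mset_def evs_def by (simp add: count_sum)
  also have "... = (\<Sum>a\<in>evs A. if l = a then dim {x. A *v x = a *\<^sub>R x} else 0)"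
    by (simp add: count_replicate_mset)
  also have "... = (if l \<in> evs A then dim {x. A *v x = l *\<^sub>R x} else 0)"
    using evs_finite[OF assms] by (simp add: sum.delta)
  finally show ?thesis .
qed

lemma mem_ev:
  fixes A :: "real^'n^'n"
  assumes "symm A" "l \<in># eigenvalue_mset A"
  shows "l \<in> evs A"
proof -
  have "count (eigenvalue_mset A) l \<noteq> 0" using assms(2) by (simp add: count_eq_zero_iff)
  thus ?thesis using count_ev[OF assms(1), of l] by (auto split: if_splits)
qed

lemma psd_ev_nonneg:
  fixes A :: "real^'n^'n"
  assumes "\<And>z. 0 \<le> z \<bullet> (A *v z)" "l \<in> evs A"
  shows "0 \<le> l"
proof -
  obtain x where x: "x \<noteq> 0" "A *v x = l *\<^sub>R x" using assms(2) by (auto simp: evs_def)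
  have "0 \<le> x \<bullet> (A *v x)" by (rule assms(1))
  also have "... = l * (x \<bullet> x)" using x by simp
  finally have "0 \<le> l * (x \<bullet> x)" .
  moreover have "x \<bullet> x > 0" using x by simp
  ultimately show ?thesis by (simp add: zero_le_mult_iff)
qed

lemma l2_zero:
  fixes X :: "real multiset"
  assumes "\<forall>a\<in>#X. 0 \<le> a" "count X 0 \<ge> 2"
  shows "sorted_list_of_multiset X ! 1 = 0"
proof -
  define l where "l = sorted_list_of_multiset X"
  have ml: "mset l = X" and sl: "sorted l" unfolding l_def
    by (simp_all add: mset_sorted_list_of_multiset sorted_sorted_list_of_multiset)
  have "count (mset l) 0 \<ge> 2" using ml assms by simp
  hence "length l \<ge> 2" by (metis count_le_size size_mset order_trans)
  then obtain a0 a1 r where l: "l = a0 # a1 # r"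
    by (metis One_nat_def Suc_1 Suc_le_length_iff)
  have nn: "\<forall>a\<in>set l. 0 \<le> a" using assms(1) ml by auto
  have "a1 \<le> 0"
  proof (rule ccontr)
    assume "\<not> a1 \<le> 0"
    hence "\<forall>y\<in>set r. y > 0" using sl l by auto
    hence c: "count (mset r) 0 = 0" by (auto simp: count_eq_zero_iff)
    have "count (mset l) 0 = count (mset r) 0 + (if a0 = 0 then 1 else 0)"
      using l \<open>\<not> a1 \<le> 0\<close> by simp
    hence "count (mset l) 0 \<le> 1" using c by simp
    thus False using \<open>count (mset l) 0 \<ge> 2\<close> by simp
  qed
  hence "a1 = 0" using nn l by force
  thus ?thesis using l l_def by simp
qed

lemma l2_pos:
  fixes X :: "real multiset"
  assumes "\<forall>a\<in>#X. 0 \<le> a" "count X 0 = 1" "a \<in># X" "a > 0"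
  shows "sorted_list_of_multiset X ! 1 > 0"
proof -
  define l where "l = sorted_list_of_multiset X"
  have ml: "mset l = X" and sl: "sorted l" unfolding l_def
    by (simp_all add: mset_sorted_list_of_multiset sorted_sorted_list_of_multiset)
  have "0 \<in> set l" "a \<in> set l" using assms ml
    by (metis count_eq_zero_iff one_neq_zero set_mset_mset, metis set_mset_mset)
  hence "{0, a} \<subseteq> set l" by auto
  hence "card {0, a} \<le> length l" by (metis card_length card_mono List.finite_set order_trans)
  hence "length l \<ge> 2" using assms(4) by simp
  then obtain a0 a1 r where l: "l = a0 # a1 # r"
    by (metis One_nat_def Suc_1 Suc_le_length_iff)
  have nn: "\<forall>a\<in>set l. 0 \<le> a" using assms(1) ml by auto
  have "a0 \<le> 0" using sl l \<open>0 \<in> set l\<close> by auto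
  hence "a0 = 0" using nn l by force
  have "a1 \<noteq> 0"
  proof
    assume "a1 = 0"
    hence "count (mset l) 0 \<ge> 2" using l \<open>a0 = 0\<close> by simp
    thus False using ml assms(2) by simp
  qed
  hence "a1 > 0" using nn l by force
  thus ?thesis using l unfolding l_def[symmetric] by simp
qed




definition onesv :: "real^'n" where "onesv = (\<chi> i. 1)"

lemma inner_onesv: "onesv \<bullet> x = (\<Sum>i\<in>UNIV. x $ i)"
  by (simp add: onesv_def inner_vec_def)

lemma quad_scale: "(c *\<^sub>R v) \<bullet> ((A::real^'n^'n) *v (c *\<^sub>R v)) = c^2 * (v \<bullet> (A *v v))"
  by (simp add: matrix_vector_mult_scaleR power2_eq_square)

lemma exists_ev_perp:
  fixes A :: "real^'n^'n"
  assumes sA: "symm A" and A1: "A *v onesv = 0" and c2: "CARD('n) \<ge> 2"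
  shows "\<exists>y l. y \<noteq> 0 \<and> onesv \<bullet> y = 0 \<and> A *v y = l *\<^sub>R y"
proof -
  define S :: "(real^'n) set" where "S = sphere 0 1 \<inter> {y. onesv \<bullet> y = 0}"
  have cS: "compact S" unfolding S_def by (intro compact_Int_closed compact_sphere closed_hyperplane)
  obtain i j :: 'n where ij: "i \<noteq> j"
  proof -
    have "\<not> (\<forall>i j::'n. i = j)"
    proof
      assume "\<forall>i j::'n. i = j"
      hence "card (UNIV :: 'n set) \<le> 1" by (simp add: card_le_Suc0_iff_eq)
      thus False using c2 by simp
    qed
    thus ?thesis using that by blast
  qed
  define y0 :: "real^'n" where "y0 = axis i 1 - axis j 1"
  have "y0 \<noteq> 0" using ij by (simp add: y0_def vec_eq_iff axis_def) (metis)
  have ax: "onesv \<bullet> axis k (1::real) = 1" for k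
  proof -
    have "axis k (1::real) \<bullet> onesv = 1" by (simp add: inner_axis' onesv_def)
    thus ?thesis by (simp add: inner_commute)
  qed
  have "onesv \<bullet> y0 = 0" by (simp add: y0_def inner_diff_right ax)
  have "(1 / norm y0) *\<^sub>R y0 \<in> S"
    using \<open>y0 \<noteq> 0\<close> \<open>onesv \<bullet> y0 = 0\<close> by (simp add: S_def)
  hence neS: "S \<noteq> {}" by auto
  have cont: "continuous_on S (\<lambda>y. y \<bullet> (A *v y))"
    by (intro continuous_intros matrix_vector_mult_linear_continuous_on)
  obtain x where xS: "x \<in> S" and xmax: "\<And>y. y \<in> S \<Longrightarrow> y \<bullet> (A *v y) \<le> x \<bullet> (A *v x)"
    using continuous_attains_sup[OF cS neS cont] by blast
  define lam where "lam = x \<bullet> (A *v x)"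
  have nx: "norm x = 1" and ox: "onesv \<bullet> x = 0" using xS by (auto simp: S_def)
  have bound: "v \<bullet> (A *v v) \<le> lam * (norm v)^2" if "onesv \<bullet> v = 0" for v
  proof (cases "v = 0")
    case True thus ?thesis by simp
  next
    case False
    have "(1 / norm v) *\<^sub>R v \<in> S" using False that by (simp add: S_def)
    hence "((1 / norm v) *\<^sub>R v) \<bullet> (A *v ((1 / norm v) *\<^sub>R v)) \<le> lam"
      unfolding lam_def by (rule xmax)
    hence "(1 / norm v)^2 * (v \<bullet> (A *v v)) \<le> lam" by (simp only: quad_scale)
    hence "(v \<bullet> (A *v v)) / (norm v)^2 \<le> lam" by (simp add: power_divide)
    thus ?thesis using False by (simp add: divide_le_eq)
  qed
  define z where "z = A *v x - lam *\<^sub>R x"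
  have oz: "onesv \<bullet> z = 0"
  proof -
    have "onesv \<bullet> (A *v x) = (A *v onesv) \<bullet> x" using symm_inner[OF sA, of onesv x] by simp
    thus ?thesis using A1 ox by (simp add: z_def inner_diff_right)
  qed
  have xx: "x \<bullet> x = 1" using nx by (simp add: dot_square_norm)
  have Axx: "(A *v x) \<bullet> x = lam" by (simp add: lam_def inner_commute)
  have zx: "z \<bullet> x = 0" using xx Axx by (simp add: z_def inner_diff_left)
  have zAx: "z \<bullet> (A *v x) = z \<bullet> z"
    using zx by (simp add: z_def inner_diff_right inner_diff_left algebra_simps inner_commute)
  define D where "D = z \<bullet> (A *v z) - lam * (z \<bullet> z)"
  have key: "2 * t * (z \<bullet> z) + t^2 * D \<le> 0" for t
  proof -
    have "onesv \<bullet> (x + t *\<^sub>R z) = 0" using ox oz by (simp add: inner_add_right)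
    hence b1: "(x + t *\<^sub>R z) \<bullet> (A *v (x + t *\<^sub>R z)) \<le> lam * (norm (x + t *\<^sub>R z))^2" by (rule bound)
    have e1: "(x + t *\<^sub>R z) \<bullet> (A *v (x + t *\<^sub>R z)) = lam + 2*t*(z \<bullet> z) + t^2 * (z \<bullet> (A *v z))"
      using symm_inner[OF sA, of z x] zAx
      by (simp add: lam_def matrix_vector_right_distrib matrix_vector_mult_scaleR
           inner_add_left inner_add_right power2_eq_square algebra_simps inner_commute)
    have e2: "(norm (x + t *\<^sub>R z))^2 = 1 + t^2 * (z \<bullet> z)"
    proof -
      have xz: "x \<bullet> z = 0" using zx by (simp add: inner_commute)
      have "(norm (x + t *\<^sub>R z))^2 = (x + t *\<^sub>R z) \<bullet> (x + t *\<^sub>R z)" by (rule power2_norm_eq_inner)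
      also have "... = 1 + t^2 * (z \<bullet> z)" using xx zx xz
        by (simp add: inner_add_left inner_add_right power2_eq_square)
      finally show ?thesis .
    qed
    have e3: "lam * (1 + t^2 * (z \<bullet> z)) = lam + t^2 * (lam * (z \<bullet> z))"
      by (simp add: algebra_simps)
    have b2: "lam + 2*t*(z \<bullet> z) + t^2 * (z \<bullet> (A *v z)) \<le> lam + t^2 * (lam * (z \<bullet> z))"
      using b1 unfolding e1 e2 e3 .
    moreover have "t^2 * D = t^2 * (z \<bullet> (A *v z)) - t^2 * (lam * (z \<bullet> z))"
      by (simp add: D_def algebra_simps)
    ultimately show ?thesis by linarith
  qed
  have "z = 0"
  proof (rule ccontr)
    assume "z \<noteq> 0"
    hence zz: "z \<bullet> z > 0" by simp
    define t where "t = (z \<bullet> z) / (\<bar>D\<bar> + 1)"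
    have tpos: "t > 0" using zz by (simp add: t_def)
    have "t * \<bar>D\<bar> \<le> z \<bullet> z"
    proof -
      have "t * \<bar>D\<bar> = (z \<bullet> z) * (\<bar>D\<bar> / (\<bar>D\<bar> + 1))" by (simp add: t_def)
      also have "... \<le> (z \<bullet> z) * 1"
        using zz by (intro mult_left_mono) auto
      finally show ?thesis by simp
    qed
    hence "t * D \<ge> - (z \<bullet> z)" using tpos
    proof -
      have "-\<bar>D\<bar> \<le> D" by arith
      hence "t * (-\<bar>D\<bar>) \<le> t * D" using tpos by (intro mult_left_mono) auto
      thus ?thesis using \<open>t * \<bar>D\<bar> \<le> z \<bullet> z\<close> by simp
    qed
    hence "2 * (z \<bullet> z) + t * D > 0" using zz by linarith
    hence "t * (2 * (z \<bullet> z) + t * D) > 0" using tpos by simp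
    moreover have "t * (2 * (z \<bullet> z) + t * D) = 2 * t * (z \<bullet> z) + t^2 * D"
      by (simp add: power2_eq_square algebra_simps)
    ultimately show False using key[of t] by simp
  qed
  hence "A *v x = lam *\<^sub>R x" by (simp add: z_def)
  moreover have "x \<noteq> 0" using nx by auto
  ultimately show ?thesis using ox by blast
qed




lemma onesv_nth [simp]: "onesv $ i = 1"
  by (simp add: onesv_def)

lemma ones_mv: "ones_mat *v x = (onesv \<bullet> x) *\<^sub>R (onesv :: real^'n)"
  by (simp add: vec_eq_iff ones_mat_def matrix_vector_mult_def inner_onesv)

lemma symm_ones: "symm (ones_mat :: real^'n^'n)"
  by (simp add: symm_def transpose_def ones_mat_def vec_eq_iff)

lemma onesv_sq: "onesv \<bullet> (onesv :: real^'n) = real CARD('n)"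
  by (simp add: inner_onesv)

lemma onesv_nz: "(onesv :: real^'n) \<noteq> 0"
proof
  assume "(onesv :: real^'n) = 0"
  hence "onesv \<bullet> (onesv :: real^'n) = 0" by simp
  thus False by (simp add: onesv_sq)
qed

lemma proj_quad:
  fixes A :: "real^'n^'n"
  assumes "symm A" "A *v onesv = 0"
  shows "x \<bullet> (A *v x) = (x - c *\<^sub>R onesv) \<bullet> (A *v (x - c *\<^sub>R onesv))"
proof -
  have "onesv \<bullet> (A *v x) = (A *v onesv) \<bullet> x" using symm_inner[OF assms(1), of onesv x] by simp
  hence o: "onesv \<bullet> (A *v x) = 0" using assms(2) by simp
  show ?thesis using assms(2) o
    by (simp add: matrix_vector_mult_diff_distrib matrix_vector_mult_scaleR inner_diff_left)
qed

locale sdp_setup =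
  fixes Lp Lt :: "real^'n::finite^'n"
  assumes sP: "symm Lp" and sT: "symm Lt" and P1: "Lp *v onesv = 0" and T1: "Lt *v onesv = 0"
    and psdP: "\<And>x. 0 \<le> x \<bullet> (Lp *v x)" and psdT: "\<And>x. 0 \<le> x \<bullet> (Lt *v x)"
begin

definition "Q = Lp ** Lp + 2 *\<^sub>R Lt"

definition "Sm \<alpha> \<beta> = mat 1 - (2*\<alpha>) *\<^sub>R Lp + \<beta> *\<^sub>R Q - (1 / real CARD('n)) *\<^sub>R ones_mat"

definition "rh \<alpha> = onorm ((*v) (Sm \<alpha> (\<alpha>^2)))"

lemma Q_symm: "symm Q"
  unfolding Q_def by (intro symm_add symm_scaleR symm_mult_self sP sT)

lemma Q_mv: "Q *v x = Lp *v (Lp *v x) + 2 *\<^sub>R (Lt *v x)"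
  by (simp add: Q_def matrix_vector_mult_add_rdistrib scaleR_mv matrix_vector_mul_assoc)

lemma Q_quad: "x \<bullet> (Q *v x) = (Lp *v x) \<bullet> (Lp *v x) + 2 * (x \<bullet> (Lt *v x))"
proof -
  have "x \<bullet> (Lp *v (Lp *v x)) = (Lp *v x) \<bullet> (Lp *v x)"
    using symm_inner[OF sP, of x "Lp *v x"] by simp
  thus ?thesis by (simp add: Q_mv inner_add_right)
qed

lemma Q_psd: "0 \<le> x \<bullet> (Q *v x)"
  using psdT[of x] by (simp add: Q_quad)

lemma Q1: "Q *v onesv = 0"
  by (simp add: Q_mv P1 T1)

lemma Sm_symm: "symm (Sm \<alpha> \<beta>)"
  unfolding Sm_def by (intro symm_add symm_diff symm_scaleR symm_mat1 sP Q_symm symm_ones)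

lemma Sm_mv: "Sm \<alpha> \<beta> *v x = x - (2*\<alpha>) *\<^sub>R (Lp *v x) + \<beta> *\<^sub>R (Q *v x)
    - ((onesv \<bullet> x) / real CARD('n)) *\<^sub>R onesv"
  by (simp add: Sm_def matrix_vector_mult_add_rdistrib matrix_vector_mult_diff_rdistrib scaleR_mv ones_mv)

lemma Sm1: "Sm \<alpha> \<beta> *v onesv = 0"
  by (simp add: Sm_mv P1 Q1 onesv_sq)

lemma Sm_quad: "x \<bullet> (Sm \<alpha> \<beta> *v x) = x \<bullet> x - 2*\<alpha> * (x \<bullet> (Lp *v x)) + \<beta> * (x \<bullet> (Q *v x))
    - (onesv \<bullet> x)^2 / real CARD('n)"
  by (simp add: Sm_mv inner_diff_right inner_add_right power2_eq_square inner_commute[of x onesv])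

lemma Sm_quad_perp:
  assumes "onesv \<bullet> y = 0"
  shows "y \<bullet> (Sm \<alpha> \<beta> *v y) = y \<bullet> y - 2*\<alpha> * (y \<bullet> (Lp *v y)) + \<beta> * (y \<bullet> (Q *v y))"
  using assms by (simp add: Sm_quad)

lemma Sm_mono:
  assumes "\<alpha>^2 \<le> \<beta>"
  shows "x \<bullet> (Sm \<alpha> (\<alpha>^2) *v x) \<le> x \<bullet> (Sm \<alpha> \<beta> *v x)"
proof -
  have "\<alpha>^2 * (x \<bullet> (Q *v x)) \<le> \<beta> * (x \<bullet> (Q *v x))"
    using assms Q_psd[of x] by (intro mult_right_mono) auto
  thus ?thesis by (simp add: Sm_quad)
qed

lemma Sm_psd: "0 \<le> x \<bullet> (Sm \<alpha> (\<alpha>^2) *v x)"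
proof -
  define y where "y = x - ((onesv \<bullet> x) / real CARD('n)) *\<^sub>R onesv"
  have oy: "onesv \<bullet> y = 0" by (simp add: y_def inner_diff_right onesv_sq)
  have "x \<bullet> (Sm \<alpha> (\<alpha>^2) *v x) = y \<bullet> (Sm \<alpha> (\<alpha>^2) *v y)"
    unfolding y_def by (rule proj_quad[OF Sm_symm Sm1])
  also have "... = y \<bullet> y - 2*\<alpha> * (y \<bullet> (Lp *v y)) + \<alpha>^2 * ((Lp *v y) \<bullet> (Lp *v y) + 2 * (y \<bullet> (Lt *v y)))"
    using oy by (simp add: Sm_quad_perp Q_quad)
  also have "... = (y - \<alpha> *\<^sub>R (Lp *v y)) \<bullet> (y - \<alpha> *\<^sub>R (Lp *v y)) + 2 * \<alpha>^2 * (y \<bullet> (Lt *v y))"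
  proof -
    have "(Lp *v y) \<bullet> y = y \<bullet> (Lp *v y)" by (simp add: inner_commute)
    thus ?thesis by (simp add: inner_diff_left inner_diff_right algebra_simps power2_eq_square)
  qed
  also have "... \<ge> 0" using psdT[of y] by (simp add: inner_ge_zero)
  finally show ?thesis .
qed

lemma rh_quad: "x \<bullet> (Sm \<alpha> (\<alpha>^2) *v x) \<le> rh \<alpha> * (norm x)^2"
  unfolding rh_def by (rule quad_le_onorm)

lemma rh_le:
  assumes "\<And>x. x \<bullet> (Sm \<alpha> (\<alpha>^2) *v x) \<le> c * (norm x)^2" "c \<ge> 0"
  shows "rh \<alpha> \<le> c"
  unfolding rh_def by (rule onorm_le_quad[OF Sm_symm Sm_psd assms])

lemma rh_nonneg: "0 \<le> rh \<alpha>"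
  unfolding rh_def by (rule onorm_pos_le[OF matrix_vector_mul_bounded_linear])

lemma quad_le_imp_nonneg:
  assumes "\<And>x. x \<bullet> (Sm \<alpha> (\<alpha>^2) *v x) \<le> c * (norm x)^2"
  shows "c \<ge> 0"
proof -
  have "0 \<le> onesv \<bullet> (Sm \<alpha> (\<alpha>^2) *v onesv)" by (rule Sm_psd)
  also have "... \<le> c * (norm (onesv::real^'n))^2" by (rule assms)
  finally have h: "0 \<le> c * (norm (onesv::real^'n))^2" .
  have N: "(norm (onesv::real^'n))^2 > 0" using onesv_nz by simp
  show ?thesis
  proof (rule ccontr)
    assume "\<not> c \<ge> 0"
    hence "c * (norm (onesv::real^'n))^2 < 0" using N by (simp add: mult_neg_pos)
    thus False using h by simp
  qed
qed

end



context sdp_setup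
begin

lemma rh_lip:
  "rh \<alpha> \<le> rh \<beta> + (\<bar>2*\<alpha> - 2*\<beta>\<bar> * onorm ((*v) Lp) + \<bar>\<alpha>^2 - \<beta>^2\<bar> * onorm ((*v) Q))"
proof -
  define h where "h = \<bar>2*\<alpha> - 2*\<beta>\<bar> * onorm ((*v) Lp) + \<bar>\<alpha>^2 - \<beta>^2\<bar> * onorm ((*v) Q)"
  have K1: "norm (Lp *v x) \<le> onorm ((*v) Lp) * norm x" for x
    by (rule onorm[OF matrix_vector_mul_bounded_linear])
  have K2: "norm (Q *v x) \<le> onorm ((*v) Q) * norm x" for x
    by (rule onorm[OF matrix_vector_mul_bounded_linear])
  have "norm (Sm \<alpha> (\<alpha>^2) *v x) \<le> (rh \<beta> + h) * norm x" for x
  proof -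
    have e: "Sm \<alpha> (\<alpha>^2) *v x = Sm \<beta> (\<beta>^2) *v x + ((-(2*\<alpha> - 2*\<beta>)) *\<^sub>R (Lp *v x) + (\<alpha>^2 - \<beta>^2) *\<^sub>R (Q *v x))"
      by (simp add: Sm_mv algebra_simps)
    have "norm (Sm \<alpha> (\<alpha>^2) *v x) \<le> norm (Sm \<beta> (\<beta>^2) *v x) + (norm ((-(2*\<alpha> - 2*\<beta>)) *\<^sub>R (Lp *v x)) + norm ((\<alpha>^2 - \<beta>^2) *\<^sub>R (Q *v x)))"
      unfolding e by (intro order_trans[OF norm_triangle_ineq] add_left_mono norm_triangle_ineq)
    also have "norm ((-(2*\<alpha> - 2*\<beta>)) *\<^sub>R (Lp *v x)) \<le> \<bar>2*\<alpha> - 2*\<beta>\<bar> * (onorm ((*v) Lp) * norm x)"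
      unfolding norm_scaleR abs_minus_cancel using K1[of x] by (intro mult_left_mono) auto
    also have "norm ((\<alpha>^2 - \<beta>^2) *\<^sub>R (Q *v x)) \<le> \<bar>\<alpha>^2 - \<beta>^2\<bar> * (onorm ((*v) Q) * norm x)"
      unfolding norm_scaleR using K2[of x] by (intro mult_left_mono) auto
    also have "norm (Sm \<beta> (\<beta>^2) *v x) \<le> rh \<beta> * norm x"
      unfolding rh_def by (rule onorm[OF matrix_vector_mul_bounded_linear])
    finally show ?thesis by (simp add: h_def algebra_simps)
  qed
  hence "rh \<alpha> \<le> rh \<beta> + h" unfolding rh_def[of \<alpha>] by (intro onorm_le) auto
  thus ?thesis by (simp add: h_def)
qed

lemma rh_cont: "continuous_on UNIV rh"
proof (intro continuous_at_imp_continuous_on ballI)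
  fix \<beta> :: real
  define g where "g \<alpha> = \<bar>2*\<alpha> - 2*\<beta>\<bar> * onorm ((*v) Lp) + \<bar>\<alpha>^2 - \<beta>^2\<bar> * onorm ((*v) Q)" for \<alpha>
  have "(g \<longlongrightarrow> g \<beta>) (at \<beta>)" unfolding g_def by (intro tendsto_intros)
  hence g0: "(g \<longlongrightarrow> 0) (at \<beta>)" by (simp add: g_def)
  have "norm (rh \<alpha> - rh \<beta>) \<le> g \<alpha>" for \<alpha>
  proof -
    have "rh \<alpha> \<le> rh \<beta> + g \<alpha>" unfolding g_def by (rule rh_lip)
    moreover have "rh \<beta> \<le> rh \<alpha> + g \<alpha>"
      using rh_lip[of \<beta> \<alpha>] unfolding g_def by (simp add: abs_minus_commute)
    ultimately show ?thesis by simp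
  qed
  hence "((\<lambda>\<alpha>. rh \<alpha> - rh \<beta>) \<longlongrightarrow> 0) (at \<beta>)"
    by (intro Lim_null_comparison[OF _ g0]) auto
  thus "isCont rh \<beta>" unfolding isCont_def by (rule LIM_zero_cancel)
qed

lemma rh_const_case:
  assumes "\<And>x. x \<bullet> (Q *v x) \<le> 0"
  shows "rh \<alpha> = rh 0"
proof -
  have eq: "x \<bullet> (Sm a (a^2) *v x) = x \<bullet> (Sm 0 (0^2) *v x)" for a x
  proof -
    have q0: "x \<bullet> (Q *v x) = 0" using assms[of x] Q_psd[of x] by simp
    hence "(Lp *v x) \<bullet> (Lp *v x) = 0" using psdT[of x] Q_quad[of x] inner_ge_zero[of "Lp *v x"] by linarith
    hence "Lp *v x = 0" by simp
    thus ?thesis using q0 by (simp add: Sm_quad)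
  qed
  have eq0: "x \<bullet> (Sm 0 0 *v x) = x \<bullet> (Sm \<alpha> (\<alpha>^2) *v x)" for x using eq[where a=\<alpha> and x=x] by simp
  have "rh \<alpha> \<le> rh 0" using rh_quad[of _ 0] rh_nonneg by (intro rh_le) (auto simp: eq)
  moreover have "rh 0 \<le> rh \<alpha>" using rh_quad[of _ \<alpha>] rh_nonneg by (intro rh_le) (auto simp: eq0)
  ultimately show ?thesis by simp
qed

lemma rh_min: "\<exists>\<alpha>0. \<forall>\<alpha>. rh \<alpha>0 \<le> rh \<alpha>"
proof (cases "\<forall>x. x \<bullet> (Q *v x) \<le> 0")
  case True
  hence e: "rh \<alpha> = rh 0" for \<alpha> by (intro rh_const_case) auto
  have "rh 0 \<le> rh \<alpha>" for \<alpha> using e[of \<alpha>] by linarith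
  thus ?thesis by blast
next
  case False
  then obtain x0 where q: "x0 \<bullet> (Q *v x0) > 0" by (auto simp: not_le)
  define qq where "qq = x0 \<bullet> (Q *v x0)"
  define N where "N = x0 \<bullet> x0"
  define a where "a = x0 \<bullet> x0 - (onesv \<bullet> x0)^2 / real CARD('n)"
  define b where "b = x0 \<bullet> (Lp *v x0)"
  have "x0 \<noteq> 0" using q by auto
  hence Npos: "N > 0" by (simp add: N_def)
  have lower: "a - 2*\<alpha>*b + \<alpha>^2 * qq \<le> rh \<alpha> * N" for \<alpha>
  proof -
    have "x0 \<bullet> (Sm \<alpha> (\<alpha>^2) *v x0) = a - 2*\<alpha>*b + \<alpha>^2 * qq"
      by (simp add: Sm_quad a_def b_def qq_def)
    moreover have "x0 \<bullet> (Sm \<alpha> (\<alpha>^2) *v x0) \<le> rh \<alpha> * N"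
      using rh_quad[of x0 \<alpha>] by (simp add: N_def power2_norm_eq_inner)
    ultimately show ?thesis by simp
  qed
  define G where "G = rh 0"
  define T where "T = \<bar>a\<bar> + 2*\<bar>b\<bar> + \<bar>G*N\<bar> + 1"
  define R where "R = T / qq + 1"
  have qpos: "qq > 0" using q by (simp add: qq_def)
  have Tpos: "T > 0" by (simp add: T_def)
  have Rpos: "R \<ge> 1" using Tpos qpos by (simp add: R_def)
  have far: "rh \<alpha> > G" if "\<bar>\<alpha>\<bar> > R" for \<alpha>
  proof -
    have a1: "\<bar>\<alpha>\<bar> \<ge> 1" using that Rpos by simp
    have "\<bar>\<alpha>\<bar> * qq > R * qq" using that qpos by (simp add: mult_strict_right_mono)
    also have "R * qq = T + qq" using qpos by (simp add: R_def field_simps)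
    finally have s1: "\<bar>\<alpha>\<bar> * qq \<ge> T" using qpos by simp
    have "\<alpha>^2 * qq = \<bar>\<alpha>\<bar> * (\<bar>\<alpha>\<bar> * qq)"
    proof -
      have "\<bar>\<alpha>\<bar> * \<bar>\<alpha>\<bar> = \<alpha>^2" by (simp add: power2_eq_square)
      thus ?thesis by (metis mult.assoc)
    qed
    also have "... \<ge> \<bar>\<alpha>\<bar> * T" using s1 by (simp add: mult_left_mono)
    finally have s2: "\<alpha>^2 * qq \<ge> \<bar>\<alpha>\<bar> * T" .
    have "\<bar>\<alpha>\<bar> * (\<bar>a\<bar> + \<bar>G*N\<bar> + 1) \<ge> 1 * (\<bar>a\<bar> + \<bar>G*N\<bar> + 1)"
      using a1 by (intro mult_right_mono) auto
    hence s3: "\<bar>\<alpha>\<bar> * T \<ge> 2*(\<bar>\<alpha>\<bar>*\<bar>b\<bar>) + \<bar>a\<bar> + \<bar>G*N\<bar> + 1"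
      by (simp add: T_def algebra_simps)
    have s4: "\<alpha>*b \<le> \<bar>\<alpha>\<bar>*\<bar>b\<bar>" by (metis abs_ge_self abs_mult)
    have "a - 2*\<alpha>*b + \<alpha>^2 * qq > G * N"
      using s2 s3 s4 abs_ge_self[of "G*N"] abs_ge_minus_self[of a] by linarith
    hence "G * N < rh \<alpha> * N" using lower[of \<alpha>] by linarith
    thus ?thesis using Npos by simp
  qed
  have "continuous_on {-R..R} rh" using rh_cont continuous_on_subset by blast
  moreover have "{-R..R} \<noteq> {}" using Rpos by simp
  ultimately obtain \<alpha>0 where a0: "\<alpha>0 \<in> {-R..R}" and m: "\<And>y. y \<in> {-R..R} \<Longrightarrow> rh \<alpha>0 \<le> rh y"
    using continuous_attains_inf[OF compact_Icc] by blast
  have "rh \<alpha>0 \<le> rh \<alpha>" for \<alpha>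
  proof (cases "\<alpha> \<in> {-R..R}")
    case True thus ?thesis by (rule m)
  next
    case False
    hence "\<bar>\<alpha>\<bar> > R" by auto
    hence "rh \<alpha> > G" by (rule far)
    moreover have "rh \<alpha>0 \<le> G" unfolding G_def using Rpos by (intro m) auto
    ultimately show ?thesis by simp
  qed
  thus ?thesis by blast
qed

lemma rh_small:
  assumes mu: "\<mu> > 0" and coer: "\<And>y. onesv \<bullet> y = 0 \<Longrightarrow> \<mu> * (y \<bullet> y) \<le> y \<bullet> (Lp *v y)"
  shows "\<exists>a b. a < b \<and> (\<forall>\<alpha>\<in>{a<..<b}. rh \<alpha> < 1)"
proof -
  define K where "K = onorm ((*v) Q)"
  have K0: "K \<ge> 0" unfolding K_def by (rule onorm_pos_le[OF matrix_vector_mul_bounded_linear])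
  define b where "b = 2 * \<mu> / (K + 1)"
  have bpos: "b > 0" using mu K0 by (simp add: b_def)
  have "rh \<alpha> < 1" if "\<alpha> \<in> {0<..<b}" for \<alpha>
  proof -
    have ap: "\<alpha> > 0" and ab: "\<alpha> < b" using that by auto
    define c where "c = 1 - 2*\<alpha>*\<mu> + \<alpha>^2 * K"
    have "\<alpha> * (K + 1) < 2 * \<mu>" using ab K0 by (simp add: b_def field_simps)
    hence "\<alpha> * K < 2 * \<mu>" using ap by (simp add: algebra_simps)
    hence "\<alpha> * (\<alpha> * K) < \<alpha> * (2 * \<mu>)" using ap by (simp add: mult_strict_left_mono)
    hence c1: "c < 1" by (simp add: c_def power2_eq_square algebra_simps)
    define c' where "c' = max c 0"
    have "x \<bullet> (Sm \<alpha> (\<alpha>^2) *v x) \<le> c' * (norm x)^2" for x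
    proof -
      define t where "t = (onesv \<bullet> x) / real CARD('n)"
      define y where "y = x - t *\<^sub>R onesv"
      have oy: "onesv \<bullet> y = 0" by (simp add: y_def t_def inner_diff_right onesv_sq)
      have "x \<bullet> (Sm \<alpha> (\<alpha>^2) *v x) = y \<bullet> (Sm \<alpha> (\<alpha>^2) *v y)"
        unfolding y_def by (rule proj_quad[OF Sm_symm Sm1])
      also have "... = y \<bullet> y - 2*\<alpha> * (y \<bullet> (Lp *v y)) + \<alpha>^2 * (y \<bullet> (Q *v y))"
        using oy by (rule Sm_quad_perp)
      also have "... \<le> y \<bullet> y - 2*\<alpha> * (\<mu> * (y \<bullet> y)) + \<alpha>^2 * (K * (y \<bullet> y))"
      proof -
        have "2*\<alpha> * (\<mu> * (y \<bullet> y)) \<le> 2*\<alpha> * (y \<bullet> (Lp *v y))"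
          using coer[OF oy] ap by (intro mult_left_mono) auto
        moreover have "\<alpha>^2 * (y \<bullet> (Q *v y)) \<le> \<alpha>^2 * (K * (y \<bullet> y))"
          using quad_le_onorm[of y Q] by (intro mult_left_mono) (auto simp: K_def power2_norm_eq_inner)
        ultimately show ?thesis by linarith
      qed
      also have "... = c * (y \<bullet> y)" by (simp add: c_def algebra_simps)
      also have "... \<le> c' * (y \<bullet> y)" by (intro mult_right_mono) (auto simp: c'_def)
      also have "... \<le> c' * (x \<bullet> x)"
      proof -
        have "x = y + t *\<^sub>R onesv" by (simp add: y_def)
        hence "x \<bullet> x = y \<bullet> y + t^2 * real CARD('n)"
          using oy by (simp add: inner_add_left inner_add_right onesv_sq power2_eq_square inner_commute)
        hence "y \<bullet> y \<le> x \<bullet> x" by simp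
        thus ?thesis by (intro mult_left_mono) (auto simp: c'_def)
      qed
      finally show ?thesis by (simp add: power2_norm_eq_inner)
    qed
    hence "rh \<alpha> \<le> c'" by (rule rh_le) (simp add: c'_def)
    thus ?thesis using c1 by (simp add: c'_def)
  qed
  thus ?thesis using bpos by (intro exI[of _ 0] exI[of _ b]) auto
qed

end



lemma const_perp_zero:
  fixes y :: "real^'n"
  assumes "\<forall>i k. y$i = y$k" "onesv \<bullet> y = 0"
  shows "y = 0"
proof -
  have "y $ i = 0" for i
  proof -
    have "onesv \<bullet> y = (\<Sum>k::'n\<in>UNIV. y$i)" unfolding inner_onesv
    proof (rule sum.cong[OF refl])
      fix k show "y $ k = y $ i" using assms(1) by blast
    qed
    hence "real CARD('n) * y$i = 0" using assms(2) by simp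
    thus ?thesis by simp
  qed
  thus ?thesis by (simp add: vec_eq_iff)
qed

lemma const_eq_scale:
  fixes x :: "real^'n"
  assumes "\<forall>i k. x$i = x$k"
  shows "x = (x$i0) *\<^sub>R onesv"
  using assms by (simp add: vec_eq_iff)

lemma indep_single: "(v::real^'n) \<noteq> 0 \<Longrightarrow> independent {v}"
  using independent_insertI[of v "{}"] by (simp add: independent_empty)

lemma lapw_one: "lapw w *v onesv = 0"
  by (simp add: vec_eq_iff lapw_mv)

lemma lambda2_pos:
  assumes sym: "\<And>i j. w i j = w j i" and nn: "\<And>i j. 0 \<le> w i j"
    and ker: "\<And>x. lapw w *v x = 0 \<Longrightarrow> \<forall>i k. x$i = x$k"
    and c2: "CARD('n::finite) \<ge> 2"
  shows "lambda2 (lapw w :: real^'n^'n) > 0"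
proof -
  define A :: "real^'n^'n" where "A = lapw w"
  have sA: "symm A" unfolding A_def by (rule lapw_symm[OF sym])
  have pA: "\<And>x. 0 \<le> x \<bullet> (A *v x)" unfolding A_def by (rule lapw_psd[OF sym nn])
  have A1: "A *v onesv = 0" unfolding A_def by (rule lapw_one)
  have kerA: "{x. A *v x = 0 *\<^sub>R x} = span {onesv}"
  proof
    show "{x. A *v x = 0 *\<^sub>R x} \<subseteq> span {onesv}"
    proof
      fix x assume "x \<in> {x. A *v x = 0 *\<^sub>R x}"
      hence "\<forall>i k. x$i = x$k" using ker unfolding A_def by simp
      hence "x = (x$undefined) *\<^sub>R onesv" by (rule const_eq_scale)
      thus "x \<in> span {onesv}" by (metis span_base span_scale singletonI)
    qed
    show "span {onesv} \<subseteq> {x. A *v x = 0 *\<^sub>R x}"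
      using A1 by (auto simp: span_singleton matrix_vector_mult_scaleR)
  qed
  have d1: "dim {x. A *v x = 0 *\<^sub>R x} = 1"
    unfolding kerA using indep_single[OF onesv_nz] by (simp add: dim_span dim_eq_card_independent)
  have ev0: "0 \<in> evs A" using A1 onesv_nz unfolding evs_def by auto
  have c0: "count (eigenvalue_mset A) 0 = 1" using count_ev[OF sA, of 0] ev0 d1 by simp
  obtain y l where y: "y \<noteq> 0" "onesv \<bullet> y = 0" "A *v y = l *\<^sub>R y"
    using exists_ev_perp[OF sA A1 c2] by blast
  have evl: "l \<in> evs A" using y unfolding evs_def by auto
  have "l \<ge> 0" by (rule psd_ev_nonneg[OF pA evl])
  moreover have "l \<noteq> 0"
  proof
    assume "l = 0"
    hence "A *v y = 0" using y by simp
    hence "\<forall>i k. y$i = y$k" using ker unfolding A_def by simp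
    hence "y = 0" using y(2) by (rule const_perp_zero)
    thus False using y(1) by simp
  qed
  ultimately have lpos: "l > 0" by simp
  have "1 \<le> dim {x. A *v x = l *\<^sub>R x}"
  proof -
    have "card {y} \<le> dim {x. A *v x = l *\<^sub>R x}"
      by (rule independent_card_le_dim) (use y indep_single in auto)
    thus ?thesis by simp
  qed
  hence "count (eigenvalue_mset A) l \<ge> 1" using count_ev[OF sA, of l] evl by simp
  hence "count (eigenvalue_mset A) l \<noteq> 0" by simp
  hence lin: "l \<in># eigenvalue_mset A" by (simp add: count_eq_zero_iff)
  have nn': "\<forall>a\<in>#eigenvalue_mset A. 0 \<le> a"
    using mem_ev[OF sA] psd_ev_nonneg[OF pA] by blast
  have "sorted_list_of_multiset (eigenvalue_mset A) ! 1 > 0"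
    by (rule l2_pos[OF nn' c0 lin lpos])
  thus ?thesis by (simp add: lambda2_def A_def)
qed

lemma lambda2_zero:
  assumes sym: "\<And>i j. w i j = w j i" and nn: "\<And>i j. 0 \<le> w i j"
    and x: "lapw w *v x = 0" "x$i \<noteq> x$k"
  shows "lambda2 (lapw w :: real^'n::finite^'n) = 0"
proof -
  define A :: "real^'n^'n" where "A = lapw w"
  have sA: "symm A" unfolding A_def by (rule lapw_symm[OF sym])
  have pA: "\<And>x. 0 \<le> x \<bullet> (A *v x)" unfolding A_def by (rule lapw_psd[OF sym nn])
  have A1: "A *v onesv = 0" unfolding A_def by (rule lapw_one)
  have xns: "x \<notin> span {onesv}"
  proof
    assume "x \<in> span {onesv}"
    then obtain c where "x = c *\<^sub>R onesv" by (auto simp: span_singleton)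
    thus False using x(2) by simp
  qed
  have xno: "x \<noteq> onesv" using x(2) by auto
  have ind: "independent {x, onesv}"
    by (rule independent_insertI[OF xns indep_single[OF onesv_nz]])
  have sub: "{x, onesv} \<subseteq> {y. A *v y = 0 *\<^sub>R y}" using x(1) A1 unfolding A_def by auto
  have "card {x, onesv} \<le> dim {y. A *v y = 0 *\<^sub>R y}" by (rule independent_card_le_dim[OF sub ind])
  hence d2: "dim {y. A *v y = 0 *\<^sub>R y} \<ge> 2" using xno by simp
  have ev0: "0 \<in> evs A" using A1 onesv_nz unfolding evs_def by auto
  have c0: "count (eigenvalue_mset A) 0 \<ge> 2" using count_ev[OF sA, of 0] ev0 d2 by simp
  have nn': "\<forall>a\<in>#eigenvalue_mset A. 0 \<le> a"
    using mem_ev[OF sA] psd_ev_nonneg[OF pA] by blast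
  have "sorted_list_of_multiset (eigenvalue_mset A) ! 1 = 0"
    by (rule l2_zero[OF nn' c0])
  thus ?thesis by (simp add: lambda2_def A_def)
qed

lemma coercive:
  fixes A :: "real^'n^'n"
  assumes sA: "symm A" and pA: "\<And>x. 0 \<le> x \<bullet> (A *v x)"
    and ker: "\<And>x. A *v x = 0 \<Longrightarrow> \<forall>i k. x$i = x$k"
  shows "\<exists>\<mu>>0. \<forall>y. onesv \<bullet> y = 0 \<longrightarrow> \<mu> * (y \<bullet> y) \<le> y \<bullet> (A *v y)"
proof -
  define S :: "(real^'n) set" where "S = sphere 0 1 \<inter> {y. onesv \<bullet> y = 0}"
  have cS: "compact S" unfolding S_def by (intro compact_Int_closed compact_sphere closed_hyperplane)
  have inS: "(1 / norm y) *\<^sub>R y \<in> S" if "y \<noteq> 0" "onesv \<bullet> y = 0" for y :: "real^'n"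
    using that by (simp add: S_def)
  show ?thesis
  proof (cases "S = {}")
    case True
    have "y = 0" if "onesv \<bullet> y = 0" for y :: "real^'n" using inS[of y] that True by auto
    hence "\<forall>y. onesv \<bullet> y = 0 \<longrightarrow> 1 * (y \<bullet> y) \<le> y \<bullet> (A *v y)" by force
    thus ?thesis by (intro exI[of _ 1]) auto
  next
    case False
    have cont: "continuous_on S (\<lambda>y. y \<bullet> (A *v y))"
      by (intro continuous_intros matrix_vector_mult_linear_continuous_on)
    obtain y0 where y0S: "y0 \<in> S" and ymin: "\<And>y. y \<in> S \<Longrightarrow> y0 \<bullet> (A *v y0) \<le> y \<bullet> (A *v y)"
      using continuous_attains_inf[OF cS False cont] by blast
    define \<mu> where "\<mu> = y0 \<bullet> (A *v y0)"
    have "\<mu> > 0"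
    proof (rule ccontr)
      assume "\<not> \<mu> > 0"
      hence m0: "\<mu> = 0" using pA[of y0] by (simp add: \<mu>_def)
      have "((A *v y0) \<bullet> (A *v y0))^2 \<le> ((A *v y0) \<bullet> (A *v (A *v y0))) * (y0 \<bullet> (A *v y0))"
        using psd_cs[OF sA pA, of "A *v y0" y0] by simp
      hence "((A *v y0) \<bullet> (A *v y0))^2 \<le> 0" using m0 by (simp add: \<mu>_def)
      hence "A *v y0 = 0" by simp
      hence "\<forall>i k. y0$i = y0$k" by (rule ker)
      moreover have "onesv \<bullet> y0 = 0" using y0S by (simp add: S_def)
      ultimately have "y0 = 0" by (rule const_perp_zero)
      thus False using y0S by (simp add: S_def)
    qed
    moreover have "\<mu> * (y \<bullet> y) \<le> y \<bullet> (A *v y)" if "onesv \<bullet> y = 0" for y :: "real^'n"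
    proof (cases "y = 0")
      case True thus ?thesis by simp
    next
      case False
      have "\<mu> \<le> ((1 / norm y) *\<^sub>R y) \<bullet> (A *v ((1 / norm y) *\<^sub>R y))"
        unfolding \<mu>_def by (rule ymin[OF inS[OF False that]])
      also have "... = (1 / norm y)^2 * (y \<bullet> (A *v y))" by (rule quad_scale)
      finally have "\<mu> \<le> (y \<bullet> (A *v y)) / (norm y)^2" by (simp add: power_divide)
      hence "\<mu> * (norm y)^2 \<le> y \<bullet> (A *v y)" using False by (simp add: le_divide_eq)
      thus ?thesis by (simp add: power2_norm_eq_inner)
    qed
    ultimately show ?thesis by blast
  qed
qed




theorem theorem1:
  fixes E :: "('n::finite) set set"
    and Es :: "nat \<Rightarrow> 'n set set"
    and M :: nat and Cb :: real and p :: "nat \<Rightarrow> real"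
  assumes "graph_edges E"
    and "connected_graph E"
    and "\<forall>j<M. is_matching (Es j)"
    and "E = (\<Union>j<M. Es j)"
    and "\<forall>i<M. \<forall>j<M. i \<noteq> j \<longrightarrow> Es i \<inter> Es j = {}"
    and "Cb > 0"
    and "matcha_optimal M (\<lambda>j. laplacian (Es j)) Cb p"
  shows "(\<exists>a b. a < b \<and>
            (\<forall>\<alpha>\<in>{a<..<b}. matcha_rho M (\<lambda>j. laplacian (Es j)) p \<alpha> < 1))
       \<and> (\<exists>r \<alpha> \<beta>. sdp_optimal M (\<lambda>j. laplacian (Es j)) p r \<alpha> \<beta>)
       \<and> (\<forall>r \<alpha> \<beta>. sdp_optimal M (\<lambda>j. laplacian (Es j)) p r \<alpha> \<beta> \<longrightarrow>
            matcha_rho M (\<lambda>j. laplacian (Es j)) p \<alpha> = r \<and>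
            (\<forall>\<alpha>'. matcha_rho M (\<lambda>j. laplacian (Es j)) p \<alpha>
                     \<le> matcha_rho M (\<lambda>j. laplacian (Es j)) p \<alpha>'))"
proof -
  have edges: "\<forall>e\<in>Es j. card e = 2" if "j < M" for j
    using assms(1,4) that unfolding graph_edges_def by blast
  have Lj: "laplacian (Es j) = lapw (adj (Es j))" if "j < M" for j
    using laplacian_lapw[OF edges[OF that]] .
  have feas: "matcha_feasible M Cb p"
    and opt: "\<And>q. matcha_feasible M Cb q \<Longrightarrow>
        lambda2 (\<Sum>j<M. q j *\<^sub>R laplacian (Es j)) \<le> lambda2 (\<Sum>j<M. p j *\<^sub>R laplacian (Es j))"
    using assms(7) unfolding matcha_optimal_def by auto
  have p01: "0 \<le> p j" "p j \<le> 1" if "j < M" for j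
    using feas that unfolding matcha_feasible_def by auto
  define wp where "wp i k = (\<Sum>j<M. p j * adj (Es j) i k)" for i k
  define wt where "wt i k = (\<Sum>j<M. (p j * (1 - p j)) * adj (Es j) i k)" for i k
  have sumL: "(\<Sum>j<M. c j *\<^sub>R laplacian (Es j)) = lapw (\<lambda>i k. \<Sum>j<M. c j * adj (Es j) i k)"
    for c :: "nat \<Rightarrow> real"
  proof -
    have "(\<Sum>j<M. c j *\<^sub>R laplacian (Es j)) = (\<Sum>j<M. c j *\<^sub>R lapw (adj (Es j)))"
      by (rule sum.cong) (auto simp: Lj)
    also have "... = lapw (\<lambda>i k. \<Sum>j<M. c j * adj (Es j) i k)" by (rule lapw_sum) simp
    finally show ?thesis .
  qed
  have LP: "(\<Sum>j<M. p j *\<^sub>R laplacian (Es j)) = lapw wp" unfolding wp_def by (rule sumL)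
  have LT: "(\<Sum>j<M. (p j * (1 - p j)) *\<^sub>R laplacian (Es j)) = lapw wt" unfolding wt_def by (rule sumL)
  have wp_sym: "wp i k = wp k i" for i k by (simp add: wp_def adj_sym)
  have wt_sym: "wt i k = wt k i" for i k by (simp add: wt_def adj_sym)
  have wp_nn: "0 \<le> wp i k" for i k
    unfolding wp_def by (intro sum_nonneg mult_nonneg_nonneg adj_nonneg) (auto simp: p01)
  have wt_nn: "0 \<le> wt i k" for i k
    unfolding wt_def by (intro sum_nonneg mult_nonneg_nonneg adj_nonneg) (auto simp: p01)
  interpret S: sdp_setup "lapw wp" "lapw wt"
    by unfold_locales (auto intro: lapw_symm lapw_psd simp: lapw_one wp_sym wt_sym wp_nn wt_nn)
  have symL: "symm (laplacian (Es j))" if "j < M" for j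
    using that by (simp add: Lj lapw_symm adj_sym)
  have sqL: "laplacian (Es j) *v (laplacian (Es j) *v x) = 2 *\<^sub>R (laplacian (Es j) *v x)" if "j < M" for j x
    using that assms(3) by (simp add: Lj matching_sq edges)
  have rho: "matcha_rho M (\<lambda>j. laplacian (Es j)) p \<alpha> = S.rh \<alpha>" for \<alpha>
  proof -
    have "expected_WtW M (\<lambda>j. laplacian (Es j)) p \<alpha> = mat 1 - (2*\<alpha>) *\<^sub>R lapw wp
        + \<alpha>^2 *\<^sub>R (lapw wp ** lapw wp + 2 *\<^sub>R lapw wt)"
      using expected_WtW_eq[of M "\<lambda>j. laplacian (Es j)" p \<alpha>] symL sqL by (simp add: LP LT)
    thus ?thesis unfolding matcha_rho_def spec_norm_def S.rh_def S.Sm_def S.Q_def by simp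
  qed
  have feas_iff: "sdp_feasible M (\<lambda>j. laplacian (Es j)) p r \<alpha> \<beta> \<longleftrightarrow>
      \<alpha>^2 \<le> \<beta> \<and> (\<forall>x. x \<bullet> (S.Sm \<alpha> \<beta> *v x) \<le> r * (norm x)^2)" for r \<alpha> \<beta>
  proof -
    have SmE: "S.Sm \<alpha> \<beta> = mat 1 - (2*\<alpha>) *\<^sub>R lapw wp + \<beta> *\<^sub>R (lapw wp ** lapw wp + 2 *\<^sub>R lapw wt)
        - (1 / real CARD('n)) *\<^sub>R ones_mat" by (simp add: S.Sm_def S.Q_def)
    have q: "(0 \<le> x \<bullet> ((r *\<^sub>R mat 1 - S.Sm \<alpha> \<beta>) *v x)) \<longleftrightarrow> x \<bullet> (S.Sm \<alpha> \<beta> *v x) \<le> r * (norm x)^2" for x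
      by (simp add: matrix_vector_mult_diff_rdistrib scaleR_mv inner_diff_right power2_norm_eq_inner)
    show ?thesis unfolding sdp_feasible_def Let_def psd_le_def LP LT SmE[symmetric] q by simp
  qed
  have rho_le: "S.rh \<alpha> \<le> r" if "sdp_feasible M (\<lambda>j. laplacian (Es j)) p r \<alpha> \<beta>" for r \<alpha> \<beta>
  proof -
    have h: "\<alpha>^2 \<le> \<beta>" "\<And>x. x \<bullet> (S.Sm \<alpha> \<beta> *v x) \<le> r * (norm x)^2" using that feas_iff by auto
    have b: "x \<bullet> (S.Sm \<alpha> (\<alpha>^2) *v x) \<le> r * (norm x)^2" for x
      using S.Sm_mono[OF h(1), of x] h(2)[of x] by linarith
    show ?thesis by (rule S.rh_le[OF b S.quad_le_imp_nonneg[OF b]])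
  qed
  have rho_feas: "sdp_feasible M (\<lambda>j. laplacian (Es j)) p (S.rh \<alpha>) \<alpha> (\<alpha>^2)" for \<alpha>
    using S.rh_quad feas_iff by simp
  have part3: "S.rh \<alpha> = r \<and> (\<forall>\<alpha>'. S.rh \<alpha> \<le> S.rh \<alpha>')"
    if "sdp_optimal M (\<lambda>j. laplacian (Es j)) p r \<alpha> \<beta>" for r \<alpha> \<beta>
  proof -
    have f: "sdp_feasible M (\<lambda>j. laplacian (Es j)) p r \<alpha> \<beta>"
      and o: "\<And>r' \<alpha>' \<beta>'. sdp_feasible M (\<lambda>j. laplacian (Es j)) p r' \<alpha>' \<beta>' \<Longrightarrow> r \<le> r'"
      using that unfolding sdp_optimal_def by auto
    have "S.rh \<alpha> \<le> r" by (rule rho_le[OF f])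
    moreover have "r \<le> S.rh \<alpha>'" for \<alpha>' by (rule o[OF rho_feas])
    ultimately show ?thesis by (metis order_antisym order_trans)
  qed
  obtain \<alpha>0 where a0: "\<And>\<alpha>. S.rh \<alpha>0 \<le> S.rh \<alpha>" using S.rh_min by blast
  have part2: "sdp_optimal M (\<lambda>j. laplacian (Es j)) p (S.rh \<alpha>0) \<alpha>0 (\<alpha>0^2)"
    unfolding sdp_optimal_def using rho_feas rho_le a0 order_trans by blast
  have kerP: "\<forall>i k. x$i = x$k" if x: "lapw wp *v x = 0" for x :: "real^'n"
  proof (cases "CARD('n) \<ge> 2")
    case False
    hence "card (UNIV :: 'n set) \<le> Suc 0" by simp
    hence "\<forall>i k::'n. i = k" by (simp add: card_le_Suc0_iff_eq)
    thus ?thesis by metis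
  next
    case True
    define c where "c = min 1 Cb"
    have cpos: "c > 0" using assms(6) by (simp add: c_def)
    have feasq: "matcha_feasible M Cb (\<lambda>_. c)"
    proof -
      have "(\<Sum>j<M. c) = real M * c" by simp
      also have "... \<le> real M * Cb" by (intro mult_left_mono) (auto simp: c_def)
      finally show ?thesis unfolding matcha_feasible_def using cpos by (auto simp: c_def mult.commute)
    qed
    define wq where "wq i k = (\<Sum>j<M. c * adj (Es j) i k)" for i k
    have LQ: "(\<Sum>j<M. c *\<^sub>R laplacian (Es j)) = lapw wq" unfolding wq_def by (rule sumL)
    have wq_sym: "wq i k = wq k i" for i k by (simp add: wq_def adj_sym)
    have wq_nn: "0 \<le> wq i k" for i k
      unfolding wq_def using cpos by (intro sum_nonneg mult_nonneg_nonneg adj_nonneg) auto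
    have kerQ: "\<forall>i k. z$i = z$k" if z: "lapw wq *v z = 0" for z :: "real^'n"
    proof -
      have edge: "z$a = z$b" if "{a, b} \<in> E" for a b
      proof (cases "a = b")
        case True thus ?thesis by simp
      next
        case False
        from that assms(4) obtain j where j: "j < M" "{a, b} \<in> Es j" by auto
        have "c * adj (Es j) a b \<le> wq a b" unfolding wq_def
          by (rule member_le_sum) (use j cpos in \<open>auto intro!: mult_nonneg_nonneg adj_nonneg\<close>)
        hence "wq a b > 0" using False j cpos by (simp add: adj_def)
        thus ?thesis by (rule lapw_ker[OF wq_sym wq_nn z])
      qed
      have "z$u = z$v" if "(\<lambda>x y. {x, y} \<in> E)\<^sup>*\<^sup>* u v" for u v
        using that
      proof (induct rule: rtranclp_induct)
        case base thus ?case by simp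
      next
        case (step y w) thus ?case using edge[of y w] by simp
      qed
      thus ?thesis using assms(2) unfolding connected_graph_def by blast
    qed
    have "lambda2 (lapw wq :: real^'n^'n) > 0" by (rule lambda2_pos[OF wq_sym wq_nn kerQ True])
    moreover have "lambda2 (lapw wq :: real^'n^'n) \<le> lambda2 (lapw wp :: real^'n^'n)"
      using opt[OF feasq] by (simp add: LQ LP)
    ultimately have pos: "lambda2 (lapw wp :: real^'n^'n) > 0" by linarith
    show ?thesis
    proof (rule ccontr)
      assume "\<not> (\<forall>i k. x$i = x$k)"
      then obtain i k where "x$i \<noteq> x$k" by blast
      hence "lambda2 (lapw wp :: real^'n^'n) = 0" by (intro lambda2_zero[OF wp_sym wp_nn x])
      thus False using pos by simp
    qed
  qed
  obtain \<mu> where mu: "\<mu> > 0" "\<forall>y. onesv \<bullet> y = 0 \<longrightarrow> \<mu> * (y \<bullet> y) \<le> y \<bullet> (lapw wp *v y)"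
  proof -
    have sP: "symm (lapw wp)" by (rule lapw_symm) (rule wp_sym)
    have pP: "0 \<le> x \<bullet> (lapw wp *v x)" for x by (rule lapw_psd) (rule wp_sym, rule wp_nn)
    show ?thesis using coercive[of "lapw wp", OF sP pP kerP] that by blast
  qed
  have part1: "\<exists>a b. a < b \<and> (\<forall>\<alpha>\<in>{a<..<b}. S.rh \<alpha> < 1)"
    using S.rh_small[OF mu(1)] mu(2) by blast
  show ?thesis unfolding rho using part1 part2 part3 by blast
qed



end
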